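(* Let $d\ge2$ be an integer, $\omega=e^{2\pi i/d}$, and for rational $x$ write $\omega^x:=e^{2\pi i x/d}$. For $r\in\{0,\dots,d-1\}$ and $s\in\{+1,-1\}$ define $c_m=\omega^{s\,m(m+2r+d)/2}$ for all integers $m$. Then $c_{m+d}=c_m$ for all $m$ (so indices may be taken in $\mathbb{Z}_d$), and: (i) for all $t\in\mathbb{Z}_d$, $\sum_{m\in\mathbb{Z}_d}c_m\overline{c_{m+t}}=d\,\delta_{t,0}$; (ii) for all $k,m\in\mathbb{Z}_d$, $\sum_{t\in\mathbb{Z}_d}c_tc_{k-t}c_m\omega^{mt}=\sum_{t\in\mathbb{Z}_d}c_tc_kc_{m-t}\omega^{kt}$. Consequently, for any $n\ge1$, with $X,Z$ on $\mathbb{C}^d$ given by $X|k\rangle=|k+1\bmod d\rangle$, $Z|k\rangle=\omega^k|k\rangle$, with $\gamma_{2j-1}=(\prod_{l<j}X_l)Z_j$, $\gamma_{2j}=\omega^{(d+1)/2}(\prod_{l\le j}X_l)Z_j$ on $(\mathbb{C}^d)^{\otimes n}$ ($j=1,\dots,n$), $\Lambda_i=\omega^{(d+1)/2}\gamma_i\gamma_{i+1}^\dagger$ and $U_i=\frac1{\sqrt d}\sum_{m=0}^{d-1}c_m\Lambda_i^m$ for $i=1,\dots,2n-1$, each $U_i$ is unitary, $U_iU_j=U_jU_i$ whenever $|i-j|>1$, and $U_iU_{i+1}U_i=U_{i+1}U_iU_{i+1}$ for $1\le i\le 2n-2$; i.e.\ $\sigma_i\mapsto U_i$ defines a unitary representation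 of the braid group $B_{2n}$. Moreover, for $d\ge3$ the $2d$ sequences $(c_m)_{m\in\mathbb{Z}_d}$ obtained from the $2d$ choices of $(r,s)$ are pairwise distinct.
   Context: The braid group $B_{2n}$ is generated by $\sigma_1,\dots,\sigma_{2n-1}$ subject to $\sigma_i\sigma_j=\sigma_j\sigma_i$ for $|i-j|>1$ and $\sigma_i\sigma_{i+1}\sigma_i=\sigma_{i+1}\sigma_i\sigma_{i+1}$. The operators $\gamma_j$ satisfy the $\mathbb{Z}_d$ parafermion relations $\gamma_j^d=\mathbb{1}$, $\gamma_j\gamma_k=\omega^{\mathrm{sgn}(k-j)}\gamma_k\gamma_j$. In condition (ii), $c_{k-t}$, $c_{m-t}$ use indices modulo $d$. *)

theory Defs
  imports Complex_Main "Jordan_Normal_Form.Schur_Decomposition"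
begin

definition omega_pow :: "nat \<Rightarrow> real \<Rightarrow> complex" where
  "omega_pow d x = exp (2 * of_real pi * \<i> * of_real x / of_nat d)"

definition cseq :: "nat \<Rightarrow> nat \<Rightarrow> int \<Rightarrow> int \<Rightarrow> complex" where
  "cseq d r s m = omega_pow d (real_of_int (s * m * (m + 2 * int r + int d)) / 2)"

text \<open>Basis of (C^d)^{\<otimes>n}: indices a < d^n; the state of tensor factor j (1 \<le> j \<le> n)
  is the (j-1)-th base-d digit of a.\<close>
definition digit :: "nat \<Rightarrow> nat \<Rightarrow> nat \<Rightarrow> nat" where
  "digit d j a = (a div d ^ (j - 1)) mod d"

definition Zop :: "nat \<Rightarrow> nat \<Rightarrow> nat \<Rightarrow> complex mat" where
  "Zop d n j = mat (d ^ n) (d ^ n)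
     (\<lambda>(a, b). if a = b then omega_pow d (real (digit d j a)) else 0)"

definition Xop :: "nat \<Rightarrow> nat \<Rightarrow> nat \<Rightarrow> complex mat" where
  "Xop d n l = mat (d ^ n) (d ^ n)
     (\<lambda>(a, b). if digit d l a = (digit d l b + 1) mod d
                 \<and> (\<forall>j\<in>{1..n} - {l}. digit d j a = digit d j b) then 1 else 0)"

definition Xprod :: "nat \<Rightarrow> nat \<Rightarrow> nat \<Rightarrow> complex mat" where
  "Xprod d n j = foldr (\<lambda>l M. Xop d n l * M) [1..<j] (1\<^sub>m (d ^ n))"

definition gamma :: "nat \<Rightarrow> nat \<Rightarrow> nat \<Rightarrow> complex mat" where
  "gamma d n i =
     (if odd i then Xprod d n ((i + 1) div 2) * Zop d n ((i + 1) div 2)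
      else omega_pow d ((real d + 1) / 2) \<cdot>\<^sub>m (Xprod d n (i div 2 + 1) * Zop d n (i div 2)))"

definition Lambda :: "nat \<Rightarrow> nat \<Rightarrow> nat \<Rightarrow> complex mat" where
  "Lambda d n i = omega_pow d ((real d + 1) / 2) \<cdot>\<^sub>m (gamma d n i * mat_adjoint (gamma d n (i + 1)))"

definition msum :: "nat \<Rightarrow> ('b \<Rightarrow> complex mat) \<Rightarrow> 'b set \<Rightarrow> complex mat" where
  "msum N f S = mat N N (\<lambda>ij. \<Sum>m\<in>S. f m $$ ij)"

definition Uop :: "nat \<Rightarrow> nat \<Rightarrow> int \<Rightarrow> nat \<Rightarrow> nat \<Rightarrow> complex mat" where
  "Uop d r s n i = (1 / complex_of_real (sqrt (real d))) \<cdot>\<^sub>m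
     msum (d ^ n) (\<lambda>m. cseq d r s (int m) \<cdot>\<^sub>m (Lambda d n i ^\<^sub>m m)) {0..<d}"

definition unitary_mat :: "nat \<Rightarrow> complex mat \<Rightarrow> bool" where
  "unitary_mat N U \<longleftrightarrow> U \<in> carrier_mat N N \<and> U * mat_adjoint U = 1\<^sub>m N \<and> mat_adjoint U * U = 1\<^sub>m N"

end

theory Submission
  imports Defs
begin

lemma op_cis: "omega_pow d x = cis (2 * pi * x / d)"
  unfolding omega_pow_def cis_conv_exp
  by (cases "d = 0") (simp_all add: field_simps)

lemma op_add: "omega_pow d (x + y) = omega_pow d x * omega_pow d y"
  by (simp add: op_cis cis_mult add_divide_distrib distrib_left)

lemma op_zero[simp]: "omega_pow d 0 = 1"
  by (simp add: op_cis)

lemma op_period: assumes "d > 0" shows "omega_pow d (x + real_of_int k * real d) = omega_pow d x"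
proof -
  have e: "2*pi*(real_of_int k * real d)/real d = 2*pi*real_of_int k"
    using assms by simp
  have "omega_pow d (real_of_int k * real d) = 1"
    unfolding op_cis e by (rule cis_multiple_2pi) simp
  thus ?thesis by (simp add: op_add)
qed

lemma op_cnj: "cnj (omega_pow d x) = omega_pow d (- x)"
  by (simp add: op_cis cis_cnj)

lemma op_norm[simp]: "norm (omega_pow d x) = 1"
  by (simp add: op_cis)

lemma op_mult_cnj[simp]: "omega_pow d x * cnj (omega_pow d x) = 1"
  by (simp add: op_cnj op_add[symmetric])

lemma op_pow: "omega_pow d x ^ n = omega_pow d (real n * x)"
  by (induct n) (simp_all add: op_add[symmetric] algebra_simps)

lemma op_eq1: assumes "d > 0" shows "omega_pow d x = 1 \<longleftrightarrow> (\<exists>k::int. x = real_of_int k * real d)"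
proof
  assume "omega_pow d x = 1"
  hence "cos (2 * pi * x / d) = 1" by (simp add: op_cis complex_eq_iff)
  then obtain k :: int where "2 * pi * x / d = k * 2 * pi" by (auto simp: cos_one_2pi_int)
  hence "x = real_of_int k * real d" using assms by (simp add: field_simps)
  thus "\<exists>k::int. x = real_of_int k * real d" by blast
next
  assume "\<exists>k::int. x = real_of_int k * real d"
  then obtain k :: int where "x = real_of_int k * real d" by blast
  thus "omega_pow d x = 1" using op_period[OF assms, of 0 k] by simp
qed

lemma op_eq: assumes "d > 0" shows "omega_pow d x = omega_pow d y \<longleftrightarrow> (\<exists>k::int. x - y = real_of_int k * real d)"
proof -
  have "omega_pow d x = omega_pow d y \<longleftrightarrow> omega_pow d (x - y) = 1"
    using op_add[of d "x - y" y] op_mult_cnj[of d y]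
    by (metis diff_add_cancel mult_cancel_right2 norm_zero op_norm zero_neq_one mult.commute
         op_add[of d "x-y" y])
  thus ?thesis using op_eq1[OF assms] by simp
qed

lemma op_int_mod: assumes "d > 0" shows "omega_pow d (real_of_int (z mod int d)) = omega_pow d (real_of_int z)"
proof -
  have "z = z mod int d + (z div int d) * int d" by simp
  hence "real_of_int z = real_of_int (z mod int d) + real_of_int (z div int d) * real d"
    by (metis of_int_add of_int_mult of_int_of_nat_eq)
  thus ?thesis using op_period[OF assms] by simp
qed

lemma op_int_shift: assumes "d > 0" shows "omega_pow d (real_of_int (z + int d * w)) = omega_pow d (real_of_int z)"
  using op_period[OF assms, of "real_of_int z" w] by (simp add: algebra_simps)

lemma cseq_plus_d: assumes "d > 0" shows "cseq d r s (m + int d) = cseq d r s m"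
proof -
  have eq: "real_of_int (s * (m + int d) * (m + int d + 2 * int r + int d)) / 2
      = real_of_int (s * m * (m + 2 * int r + int d)) / 2 + real_of_int (s * (m + int d + int r)) * real d"
    by (simp add: field_simps)
  show ?thesis unfolding cseq_def eq by (rule op_period[OF assms])
qed

lemma cseq_plus_mult: assumes "d > 0" shows "cseq d r s (m + k * int d) = cseq d r s m"
proof (induct k rule: int_induct[where k = 0])
  case base then show ?case by simp
next
  case (step1 i)
  have "cseq d r s (m + (i + 1) * int d) = cseq d r s (m + i * int d + int d)" by (simp add: algebra_simps)
  also have "\<dots> = cseq d r s (m + i * int d)" by (rule cseq_plus_d[OF assms])
  finally show ?case using step1 by simp
next
  case (step2 i)
  have "cseq d r s (m + (i - 1) * int d) = cseq d r s (m + (i - 1) * int d + int d)"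
    by (rule cseq_plus_d[OF assms, symmetric])
  also have "m + (i - 1) * int d + int d = m + i * int d" by (simp add: algebra_simps)
  finally show ?case using step2 by simp
qed

lemma cseq_mod: assumes "d > 0" shows "cseq d r s (m mod int d) = cseq d r s m"
proof -
  have "m mod int d = m + (- (m div int d)) * int d" by (simp add: algebra_simps minus_div_mult_eq_mod)
  moreover have "cseq d r s (m + (- (m div int d)) * int d) = cseq d r s m" by (rule cseq_plus_mult[OF assms])
  ultimately show ?thesis by simp
qed

lemma cseq_prod: "cseq d r s t * cseq d r s (k - t) = cseq d r s k * omega_pow d (real_of_int (s * (t * t - k * t)))"
proof -
  have "real_of_int (s * t * (t + 2 * int r + int d)) / 2 + real_of_int (s * (k - t) * (k - t + 2 * int r + int d)) / 2
      = real_of_int (s * k * (k + 2 * int r + int d)) / 2 + real_of_int (s * (t * t - k * t))"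
    by (simp add: field_simps)
  thus ?thesis unfolding cseq_def by (simp add: op_add[symmetric])
qed

lemma cseq_cnj: "cseq d r s m * cnj (cseq d r s (m + t))
   = omega_pow d (- real_of_int (s * t * (t + 2 * int r + int d)) / 2) * omega_pow d (real_of_int (- s * t * m))"
proof -
  have "real_of_int (s * m * (m + 2 * int r + int d)) / 2 + - (real_of_int (s * (m + t) * (m + t + 2 * int r + int d)) / 2)
      = - real_of_int (s * t * (t + 2 * int r + int d)) / 2 + real_of_int (- s * t * m)"
    by (simp add: field_simps)
  thus ?thesis unfolding cseq_def by (simp add: op_cnj op_add[symmetric])
qed

lemma sum_int_nat: "(\<Sum>t\<in>{0..<int d}. g t) = (\<Sum>t\<in>{0..<d}. g (int t))"
  using sum.atLeast_int_lessThan_int_shift[of g 0 d] by simp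

lemma sum_reflect: assumes "d > 0" and per: "\<And>x. g (x mod int d) = g x"
  shows "(\<Sum>t\<in>{0..<int d}. g (c - t)) = (\<Sum>t\<in>{0..<int d}. g t)"
proof -
  have b: "bij_betw (\<lambda>t. (c - t) mod int d) {0..<int d} {0..<int d}"
    by (rule bij_betw_byWitness[where f' = "\<lambda>t. (c - t) mod int d"])
       (use assms(1) in \<open>auto simp: mod_diff_right_eq\<close>)
  have "(\<Sum>t\<in>{0..<int d}. g ((c - t) mod int d)) = (\<Sum>t\<in>{0..<int d}. g t)"
    by (rule sum.reindex_bij_betw[OF b])
  thus ?thesis using per by simp
qed

lemma geom_zero: assumes "d > 0" and nz: "omega_pow d (real_of_int j) \<noteq> 1"
  shows "(\<Sum>m\<in>{0..<int d}. omega_pow d (real_of_int (j * m))) = 0"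
proof -
  let ?x = "omega_pow d (real_of_int j)"
  have "(\<Sum>m\<in>{0..<int d}. omega_pow d (real_of_int (j * m))) = (\<Sum>m<d. ?x ^ m)"
    unfolding sum_int_nat by (rule sum.cong) (auto simp: op_pow algebra_simps)
  also have "\<dots> = (1 - ?x ^ d) / (1 - ?x)" using nz by (simp add: sum_gp_strict)
  also have "?x ^ d = 1" unfolding op_pow using op_period[OF assms(1), of 0 j] by (simp add: mult.commute)
  finally show ?thesis by simp
qed

lemma part_i: assumes "d > 0" and s: "s \<in> {1, -1}" and t: "t \<in> {0..<int d}"
  shows "(\<Sum>m\<in>{0..<int d}. cseq d r s m * cnj (cseq d r s (m + t))) = (if t = 0 then of_nat d else 0)"
proof (cases "t = 0")
  case True
  have "(\<Sum>m\<in>{0..<int d}. cseq d r s m * cnj (cseq d r s (m + t))) = (\<Sum>m\<in>{0..<int d}. 1)"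
    using True unfolding cseq_def by (intro sum.cong) auto
  then show ?thesis using True by simp
next
  case False
  have nz: "omega_pow d (real_of_int (- s * t)) \<noteq> 1"
  proof
    assume "omega_pow d (real_of_int (- s * t)) = 1"
    then obtain k :: int where "real_of_int (- s * t) = real_of_int k * real d" using op_eq1[OF assms(1)] by blast
    hence k: "- s * t = k * int d" by (metis of_int_eq_iff of_int_mult of_int_of_nat_eq)
    from t False have t1: "0 < t" "t < int d" by auto
    have "s * s = 1" using s by auto
    hence "t = (- s * k) * int d" using k by (metis minus_mult_left mult.assoc mult_1 mult_minus_right minus_minus)
    hence "int d dvd t" by simp
    hence "int d \<le> t" using t1 by (simp add: zdvd_imp_le)
    thus False using t1 by simp
  qed
  have "(\<Sum>m\<in>{0..<int d}. cseq d r s m * cnj (cseq d r s (m + t)))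
     = omega_pow d (- real_of_int (s * t * (t + 2 * int r + int d)) / 2) * (\<Sum>m\<in>{0..<int d}. omega_pow d (real_of_int (- s * t * m)))"
    unfolding cseq_cnj sum_distrib_left ..
  also have "(\<Sum>m\<in>{0..<int d}. omega_pow d (real_of_int (- s * t * m))) = 0"
    using geom_zero[OF assms(1) nz] by simp
  finally show ?thesis using False by simp
qed

lemma quad_per: assumes "d > 0"
  shows "omega_pow d (real_of_int (a * (x mod int d) * (x mod int d) + b * (x mod int d)))
       = omega_pow d (real_of_int (a * x * x + b * x))"
proof -
  define w where "w = - (x div int d)"
  have xm: "x mod int d = x + int d * w" unfolding w_def by (simp add: algebra_simps minus_div_mult_eq_mod)
  have E: "a * (x mod int d) * (x mod int d) + b * (x mod int d) = (a * x * x + b * x) + int d * (a * (2 * x * w + int d * w * w) + b * w)"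
    unfolding xm by (simp add: algebra_simps)
  show ?thesis unfolding E by (rule op_int_shift[OF assms])
qed

lemma sum_quad_eq: assumes "d > 0" and s: "s \<in> {1, -1::int}" and g: "\<sigma> \<in> {1, -1::int}"
  shows "(\<Sum>t\<in>{0..<int d}. omega_pow d (real_of_int (s * t * t + (\<sigma> * m - s * k) * t)))
       = (\<Sum>t\<in>{0..<int d}. omega_pow d (real_of_int (s * t * t + (\<sigma> * k - s * m) * t)))"
proof (cases "\<sigma> = s")
  case True
  let ?g = "\<lambda>t. omega_pow d (real_of_int (s * t * t + (\<sigma> * k - s * m) * t))"
  have "(\<Sum>t\<in>{0..<int d}. ?g (0 - t)) = (\<Sum>t\<in>{0..<int d}. ?g t)"
    by (rule sum_reflect[OF assms(1)]) (rule quad_per[OF assms(1)])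
  moreover have "\<And>t. ?g (0 - t) = omega_pow d (real_of_int (s * t * t + (\<sigma> * m - s * k) * t))"
    using True by (simp add: algebra_simps)
  ultimately show ?thesis by simp
next
  case False
  hence "\<sigma> = - s" using s g by auto
  hence "\<sigma> * m - s * k = \<sigma> * k - s * m" by (simp add: algebra_simps)
  thus ?thesis by (simp only:)
qed

lemma part_ii_gen: assumes "d > 0" and s: "s \<in> {1, -1::int}" and g: "\<sigma> \<in> {1, -1::int}"
  shows "(\<Sum>t\<in>{0..<int d}. cseq d r s t * cseq d r s (k - t) * cseq d r s m * omega_pow d (real_of_int (\<sigma> * m * t)))
       = (\<Sum>t\<in>{0..<int d}. cseq d r s t * cseq d r s k * cseq d r s (m - t) * omega_pow d (real_of_int (\<sigma> * k * t)))"
proof -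
  have L: "\<And>t. cseq d r s t * cseq d r s (k - t) * cseq d r s m * omega_pow d (real_of_int (\<sigma> * m * t))
     = cseq d r s k * cseq d r s m * omega_pow d (real_of_int (s * t * t + (\<sigma> * m - s * k) * t))"
  proof -
    fix t
    have "cseq d r s t * cseq d r s (k - t) * cseq d r s m * omega_pow d (real_of_int (\<sigma> * m * t))
       = cseq d r s k * cseq d r s m * (omega_pow d (real_of_int (s * (t * t - k * t))) * omega_pow d (real_of_int (\<sigma> * m * t)))"
      unfolding cseq_prod by (simp add: ac_simps)
    also have "\<dots> = cseq d r s k * cseq d r s m * omega_pow d (real_of_int (s * t * t + (\<sigma> * m - s * k) * t))"
      unfolding op_add[symmetric] by (simp add: algebra_simps)
    finally show "?thesis t" .
  qed
  have R: "\<And>t. cseq d r s t * cseq d r s k * cseq d r s (m - t) * omega_pow d (real_of_int (\<sigma> * k * t))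
     = cseq d r s k * cseq d r s m * omega_pow d (real_of_int (s * t * t + (\<sigma> * k - s * m) * t))"
  proof -
    fix t
    have "cseq d r s t * cseq d r s k * cseq d r s (m - t) * omega_pow d (real_of_int (\<sigma> * k * t))
       = cseq d r s k * (cseq d r s t * cseq d r s (m - t)) * omega_pow d (real_of_int (\<sigma> * k * t))"
      by (simp add: ac_simps)
    also have "\<dots> = cseq d r s k * cseq d r s m * (omega_pow d (real_of_int (s * (t * t - m * t))) * omega_pow d (real_of_int (\<sigma> * k * t)))"
      unfolding cseq_prod by (simp add: ac_simps)
    also have "\<dots> = cseq d r s k * cseq d r s m * omega_pow d (real_of_int (s * t * t + (\<sigma> * k - s * m) * t))"
      unfolding op_add[symmetric] by (simp add: algebra_simps)
    finally show "?thesis t" .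
  qed
  show ?thesis unfolding L R sum_distrib_left[symmetric] using sum_quad_eq[OF assms] by simp
qed

lemma part_ii: assumes "d > 0" and s: "s \<in> {1, -1::int}"
  shows "(\<Sum>t\<in>{0..<int d}. cseq d r s t * cseq d r s ((k - t) mod int d) * cseq d r s m
                     * omega_pow d (real_of_int (m * t)))
               = (\<Sum>t\<in>{0..<int d}. cseq d r s t * cseq d r s k * cseq d r s ((m - t) mod int d)
                     * omega_pow d (real_of_int (k * t)))"
  using part_ii_gen[OF assms(1) s, where \<sigma>="1::int" and k=k and m=m and r=r] by (simp add: cseq_mod[OF assms(1)])

lemma distinct_c: assumes d: "d \<ge> 3" and r1: "r1 < d" and r2: "r2 < d"
  and s1: "s1 \<in> {1, -1::int}" and s2: "s2 \<in> {1, -1::int}" and ne: "(r1, s1) \<noteq> (r2, s2)"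
  shows "\<exists>m\<in>{0..<int d}. cseq d r1 s1 m \<noteq> cseq d r2 s2 m"
proof (rule ccontr)
  assume "\<not> ?thesis"
  hence eq: "\<And>m. m \<in> {0..<int d} \<Longrightarrow> cseq d r1 s1 m = cseq d r2 s2 m" by blast
  have d0: "d > 0" using d by simp
  have E: "\<exists>k::int. real_of_int (s1 * m * (m + 2 * int r1 + int d)) / 2 - real_of_int (s2 * m * (m + 2 * int r2 + int d)) / 2
       = real_of_int k * real d" if "m \<in> {0..<int d}" for m
    using eq[OF that] unfolding cseq_def op_eq[OF d0] .
  have m1: "(1::int) \<in> {0..<int d}" and m2: "(2::int) \<in> {0..<int d}" using d by auto
  show False
  proof (cases "s1 = s2")
    case True
    hence r: "r1 \<noteq> r2" using ne by auto
    obtain k :: int where k: "real_of_int (s1 * 1 * (1 + 2 * int r1 + int d)) / 2 - real_of_int (s2 * 1 * (1 + 2 * int r2 + int d)) / 2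
       = real_of_int k * real d" using E[OF m1] by blast
    hence "real_of_int (s1 * (int r1 - int r2)) = real_of_int (k * int d)" using True by (simp add: field_simps)
    hence k': "s1 * (int r1 - int r2) = k * int d" by (metis of_int_eq_iff)
    have "s1 * s1 = 1" using s1 by auto
    hence "int r1 - int r2 = (s1 * k) * int d" using k' by (metis mult.assoc mult.left_commute mult_1)
    hence "int d dvd (int r1 - int r2)" by simp
    moreover have "\<bar>int r1 - int r2\<bar> < int d" "int r1 - int r2 \<noteq> 0" using r1 r2 r by auto
    ultimately show False using dvd_imp_le_int[of "int r1 - int r2" "int d"] by simp
  next
    case False
    hence ss: "s2 = - s1" using s1 s2 by auto
    obtain k1 :: int where k1: "real_of_int (s1 * 1 * (1 + 2 * int r1 + int d)) / 2 - real_of_int (s2 * 1 * (1 + 2 * int r2 + int d)) / 2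
       = real_of_int k1 * real d" using E[OF m1] by blast
    obtain k2 :: int where k2: "real_of_int (s1 * 2 * (2 + 2 * int r1 + int d)) / 2 - real_of_int (s2 * 2 * (2 + 2 * int r2 + int d)) / 2
       = real_of_int k2 * real d" using E[OF m2] by blast
    have "real_of_int (s1 * (1 + int r1 + int r2 + int d)) = real_of_int (k1 * int d)" using k1 ss by (simp add: field_simps)
    hence e1: "s1 * (1 + int r1 + int r2 + int d) = k1 * int d" by (metis of_int_eq_iff)
    have "real_of_int (s1 * (4 + 2 * int r1 + 2 * int r2 + 2 * int d)) = real_of_int (k2 * int d)" using k2 ss by (simp add: field_simps)
    hence e2: "s1 * (4 + 2 * int r1 + 2 * int r2 + 2 * int d) = k2 * int d" by (metis of_int_eq_iff)
    have "s1 * 2 = (k2 - 2 * k1) * int d" using e1 e2 by (simp add: algebra_simps)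
    moreover have "s1 * s1 = 1" using s1 by auto
    ultimately have "2 = (s1 * (k2 - 2 * k1)) * int d" by (metis mult.assoc mult.left_commute mult_1)
    hence "int d dvd 2" by (metis dvd_triv_right)
    hence "int d \<le> 2" using zdvd_imp_le[of "int d" 2] by simp
    thus False using d by simp
  qed
qed

lemma smult_one_m[simp]: "(1::'a::semiring_1) \<cdot>\<^sub>m A = A"
  by (rule eq_matI) auto

lemma smult_smult_m: "(a::'a::semiring_1) \<cdot>\<^sub>m (b \<cdot>\<^sub>m A) = (a * b) \<cdot>\<^sub>m A"
  by (rule eq_matI) (auto simp: mult.assoc)

lemma mult_carrier_sq[simp]: "A \<in> carrier_mat N N \<Longrightarrow> B \<in> carrier_mat N N \<Longrightarrow> A * B \<in> carrier_mat N N"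
  by (rule mult_carrier_mat)

lemma assoc_dim: "dim_col A = dim_row B \<Longrightarrow> dim_col B = dim_row C \<Longrightarrow> A * B * C = A * (B * (C :: 'a :: semiring_0 mat))"
  by (rule assoc_mult_mat[of A "dim_row A" "dim_col A" B "dim_col B" C "dim_col C"]) auto

lemma smult_mult_l: "dim_col A = dim_row B \<Longrightarrow> (k \<cdot>\<^sub>m A) * B = (k :: 'a :: comm_semiring_0) \<cdot>\<^sub>m (A * B)"
  by (rule mult_smult_assoc_mat[of A "dim_row A" "dim_col A" B "dim_col B"]) auto

lemma smult_mult_r: "dim_col A = dim_row B \<Longrightarrow> A * (k \<cdot>\<^sub>m B) = (k :: 'a :: comm_semiring_0) \<cdot>\<^sub>m (A * B)"
  by (rule mult_smult_distrib[of A "dim_row A" "dim_col A" B "dim_col B"]) auto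

lemma mult_entry: assumes "A \<in> carrier_mat N N" "B \<in> carrier_mat N N" "i < N" "j < N"
  shows "(A * B) $$ (i, j) = (\<Sum>k<N. A $$ (i, k) * B $$ (k, j))"
  using assms by (simp add: scalar_prod_def lessThan_atLeast0)

lemma adj_dim[simp]: "dim_row (mat_adjoint A) = dim_col A" "dim_col (mat_adjoint A) = dim_row A"
  unfolding mat_adjoint_def by auto

lemma adj_carrier[simp]: "A \<in> carrier_mat N N \<Longrightarrow> mat_adjoint A \<in> carrier_mat N N"
  by (rule carrier_matI) auto

lemma adj_entry': fixes A :: "complex mat" assumes "i < dim_col A" "j < dim_row A"
  shows "mat_adjoint A $$ (i, j) = cnj (A $$ (j, i))"
  using assms unfolding mat_adjoint_def by (simp add: mat_of_rows_index)

lemma adj_entry: fixes A :: "complex mat" assumes "A \<in> carrier_mat N N" "i < N" "j < N"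
  shows "mat_adjoint A $$ (i, j) = cnj (A $$ (j, i))"
  using assms by (simp add: adj_entry')

lemma adj_mult: fixes A B :: "complex mat" assumes A: "A \<in> carrier_mat N N" and B: "B \<in> carrier_mat N N"
  shows "mat_adjoint (A * B) = mat_adjoint B * mat_adjoint A"
proof (rule eq_matI)
  fix i j assume "i < dim_row (mat_adjoint B * mat_adjoint A)" "j < dim_col (mat_adjoint B * mat_adjoint A)"
  hence ij: "i < N" "j < N" using A B by auto
  have AB: "A * B \<in> carrier_mat N N" using A B by simp
  have "mat_adjoint (A * B) $$ (i, j) = cnj ((A * B) $$ (j, i))" by (rule adj_entry[OF AB ij])
  also have "\<dots> = cnj (\<Sum>k<N. A $$ (j, k) * B $$ (k, i))" by (simp add: mult_entry[OF A B ij(2) ij(1)])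
  also have "\<dots> = (\<Sum>k<N. mat_adjoint B $$ (i, k) * mat_adjoint A $$ (k, j))"
    using A B ij by (simp add: adj_entry mult.commute)
  also have "\<dots> = (mat_adjoint B * mat_adjoint A) $$ (i, j)"
    by (rule mult_entry[OF adj_carrier[OF B] adj_carrier[OF A] ij, symmetric])
  finally show "mat_adjoint (A * B) $$ (i, j) = (mat_adjoint B * mat_adjoint A) $$ (i, j)" .
qed (use A B in auto)

lemma adj_smult: fixes A :: "complex mat" assumes A: "A \<in> carrier_mat N N"
  shows "mat_adjoint (c \<cdot>\<^sub>m A) = cnj c \<cdot>\<^sub>m mat_adjoint A"
  by (rule eq_matI) (use A in \<open>auto simp: adj_entry'\<close>)

lemma adj_one[simp]: "mat_adjoint (1\<^sub>m N :: complex mat) = 1\<^sub>m N"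
  by (rule eq_matI) (auto simp: adj_entry')

lemma pow_add_mat: assumes A: "A \<in> carrier_mat N N"
  shows "A ^\<^sub>m (a + b) = A ^\<^sub>m a * A ^\<^sub>m b"
proof (induct b)
  case 0 then show ?case using A by simp
next
  case (Suc b)
  then show ?case using A by (simp add: assoc_mult_mat[of _ N N _ N _ N])
qed

lemma pow_comm1: assumes A: "A \<in> carrier_mat N N"
  shows "A * A ^\<^sub>m k = A ^\<^sub>m k * A"
proof -
  have "A ^\<^sub>m (1 + k) = A ^\<^sub>m (k + 1)" by simp
  thus ?thesis using A unfolding pow_add_mat[OF A] by simp
qed

lemma adj_pow: fixes A :: "complex mat" assumes A: "A \<in> carrier_mat N N"
  shows "mat_adjoint (A ^\<^sub>m k) = mat_adjoint A ^\<^sub>m k"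
proof (induct k)
  case 0 then show ?case using A by simp
next
  case (Suc k)
  have "mat_adjoint (A ^\<^sub>m Suc k) = mat_adjoint A * mat_adjoint (A ^\<^sub>m k)"
    using A by (simp add: adj_mult[OF pow_carrier_mat[OF A] A])
  also have "\<dots> = mat_adjoint A * mat_adjoint A ^\<^sub>m k" using Suc by simp
  also have "\<dots> = mat_adjoint A ^\<^sub>m Suc k" using pow_comm1[OF adj_carrier[OF A]] by simp
  finally show ?case .
qed

lemma pow_one_mat[simp]: "(1\<^sub>m N :: 'a::semiring_1 mat) ^\<^sub>m k = 1\<^sub>m N"
  by (induct k) auto

lemma pow_mult_mat: assumes A: "A \<in> carrier_mat N N"
  shows "A ^\<^sub>m (a * b) = (A ^\<^sub>m a) ^\<^sub>m b"
proof (induct b)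
  case 0 then show ?case using A by simp
next
  case (Suc b)
  have "A ^\<^sub>m (a * Suc b) = A ^\<^sub>m (a * b + a)" by (simp add: algebra_simps)
  then show ?case using Suc A by (simp add: pow_add_mat[OF A])
qed

lemma pow_mod_mat: assumes A: "A \<in> carrier_mat N N" and Ad: "A ^\<^sub>m d = 1\<^sub>m N"
  shows "A ^\<^sub>m k = A ^\<^sub>m (k mod d)"
proof -
  have "A ^\<^sub>m k = A ^\<^sub>m (d * (k div d) + k mod d)" by simp
  also have "\<dots> = (A ^\<^sub>m d) ^\<^sub>m (k div d) * A ^\<^sub>m (k mod d)" unfolding pow_add_mat[OF A] pow_mult_mat[OF A] ..
  also have "\<dots> = A ^\<^sub>m (k mod d)" using A Ad by simp
  finally show ?thesis .
qed

lemma comm_pow1: fixes A B :: "complex mat" assumes A: "A \<in> carrier_mat N N" and B: "B \<in> carrier_mat N N"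
  and AB: "A * B = q \<cdot>\<^sub>m (B * A)"
  shows "A * B ^\<^sub>m b = (q ^ b) \<cdot>\<^sub>m (B ^\<^sub>m b * A)"
proof (induct b)
  case 0 then show ?case using A B by simp
next
  case (Suc b)
  have d: "dim_row A = N" "dim_col A = N" "dim_row B = N" "dim_col B = N" using A B by auto
  have "A * B ^\<^sub>m Suc b = (A * B ^\<^sub>m b) * B" using d by (simp add: assoc_dim)
  also have "\<dots> = (q ^ b) \<cdot>\<^sub>m (B ^\<^sub>m b * (A * B))" unfolding Suc using d
    by (simp add: smult_mult_l assoc_dim)
  also have "\<dots> = (q ^ Suc b) \<cdot>\<^sub>m (B ^\<^sub>m Suc b * A)" unfolding AB using d
    by (simp add: smult_mult_r smult_smult_m assoc_dim mult.commute)
  finally show ?case .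
qed

lemma comm_pow: fixes A B :: "complex mat" assumes A: "A \<in> carrier_mat N N" and B: "B \<in> carrier_mat N N"
  and AB: "A * B = q \<cdot>\<^sub>m (B * A)"
  shows "A ^\<^sub>m a * B ^\<^sub>m b = (q ^ (a * b)) \<cdot>\<^sub>m (B ^\<^sub>m b * A ^\<^sub>m a)"
proof (induct a)
  case 0 then show ?case using A B by simp
next
  case (Suc a)
  have d: "dim_row A = N" "dim_col A = N" "dim_row B = N" "dim_col B = N" using A B by auto
  have "A ^\<^sub>m Suc a * B ^\<^sub>m b = A ^\<^sub>m a * (A * B ^\<^sub>m b)" using d by (simp add: assoc_dim)
  also have "\<dots> = (q ^ b) \<cdot>\<^sub>m ((A ^\<^sub>m a * B ^\<^sub>m b) * A)" unfolding comm_pow1[OF A B AB] using d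
    by (simp add: smult_mult_r assoc_dim)
  also have "\<dots> = (q ^ (Suc a * b)) \<cdot>\<^sub>m (B ^\<^sub>m b * A ^\<^sub>m Suc a)" unfolding Suc using d
    by (simp add: smult_mult_l smult_smult_m assoc_dim power_add mult.commute)
  finally show ?case .
qed

lemma msum_carrier[simp]: "msum N f S \<in> carrier_mat N N"
  unfolding msum_def by simp

lemma msum_dim[simp]: "dim_row (msum N f S) = N" "dim_col (msum N f S) = N"
  unfolding msum_def by simp_all

lemma msum_index[simp]: "i < N \<Longrightarrow> j < N \<Longrightarrow> msum N f S $$ (i, j) = (\<Sum>x\<in>S. f x $$ (i, j))"
  unfolding msum_def by simp

lemma msum_cong: "(\<And>x. x \<in> S \<Longrightarrow> f x = g x) \<Longrightarrow> msum N f S = msum N g S"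
  unfolding msum_def by (auto intro!: sum.cong)

lemma msum_mult_left: assumes M: "M \<in> carrier_mat N N" and f: "\<And>x. x \<in> S \<Longrightarrow> f x \<in> carrier_mat N N"
  shows "M * msum N f S = msum N (\<lambda>x. M * f x) S"
proof (rule eq_matI)
  fix i j assume "i < dim_row (msum N (\<lambda>x. M * f x) S)" "j < dim_col (msum N (\<lambda>x. M * f x) S)"
  hence ij: "i < N" "j < N" by (auto simp: msum_def)
  have "(M * msum N f S) $$ (i, j) = (\<Sum>k<N. M $$ (i, k) * (\<Sum>x\<in>S. f x $$ (k, j)))"
    using ij by (simp add: mult_entry[OF M msum_carrier ij])
  also have "\<dots> = (\<Sum>x\<in>S. \<Sum>k<N. M $$ (i, k) * f x $$ (k, j))"
    by (simp add: sum_distrib_left sum.swap[of _ S])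
  also have "\<dots> = msum N (\<lambda>x. M * f x) S $$ (i, j)"
    using ij by (auto simp: mult_entry[OF M f[OF _] ij] intro!: sum.cong)
  finally show "(M * msum N f S) $$ (i, j) = msum N (\<lambda>x. M * f x) S $$ (i, j)" .
qed (use M in \<open>auto simp: msum_def\<close>)

lemma msum_mult_right: assumes M: "M \<in> carrier_mat N N" and f: "\<And>x. x \<in> S \<Longrightarrow> f x \<in> carrier_mat N N"
  shows "msum N f S * M = msum N (\<lambda>x. f x * M) S"
proof (rule eq_matI)
  fix i j assume "i < dim_row (msum N (\<lambda>x. f x * M) S)" "j < dim_col (msum N (\<lambda>x. f x * M) S)"
  hence ij: "i < N" "j < N" by (auto simp: msum_def)
  have "(msum N f S * M) $$ (i, j) = (\<Sum>k<N. (\<Sum>x\<in>S. f x $$ (i, k)) * M $$ (k, j))"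
    using ij by (simp add: mult_entry[OF msum_carrier M ij])
  also have "\<dots> = (\<Sum>x\<in>S. \<Sum>k<N. f x $$ (i, k) * M $$ (k, j))"
    by (simp add: sum_distrib_right sum.swap[of _ S])
  also have "\<dots> = msum N (\<lambda>x. f x * M) S $$ (i, j)"
    using ij by (auto simp: mult_entry[OF f[OF _] M ij] intro!: sum.cong)
  finally show "(msum N f S * M) $$ (i, j) = msum N (\<lambda>x. f x * M) S $$ (i, j)" .
qed (use M in \<open>auto simp: msum_def\<close>)

lemma smult_msum: assumes f: "\<And>x. x \<in> S \<Longrightarrow> f x \<in> carrier_mat N N"
  shows "c \<cdot>\<^sub>m msum N f S = msum N (\<lambda>x. c \<cdot>\<^sub>m f x) S"
proof (rule eq_matI)
  fix i j assume "i < dim_row (msum N (\<lambda>x. c \<cdot>\<^sub>m f x) S)" "j < dim_col (msum N (\<lambda>x. c \<cdot>\<^sub>m f x) S)"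
  hence ij: "i < N" "j < N" by (auto simp: msum_def)
  have "(c \<cdot>\<^sub>m f x) $$ (i, j) = c * f x $$ (i, j)" if x: "x \<in> S" for x
  proof -
    have "f x \<in> carrier_mat N N" using f x by blast
    thus ?thesis using ij by simp
  qed
  thus "(c \<cdot>\<^sub>m msum N f S) $$ (i, j) = msum N (\<lambda>x. c \<cdot>\<^sub>m f x) S $$ (i, j)"
    using ij by (simp add: sum_distrib_left)
qed (auto simp: msum_def)

lemma msum_const_mat: assumes "M \<in> carrier_mat N N"
  shows "msum N (\<lambda>x. c x \<cdot>\<^sub>m M) S = (\<Sum>x\<in>S. c x) \<cdot>\<^sub>m M"
  by (rule eq_matI) (use assms in \<open>auto simp: msum_def sum_distrib_right\<close>)

lemma msum_swap: "msum N (\<lambda>x. msum N (\<lambda>y. F x y) T) S = msum N (\<lambda>y. msum N (\<lambda>x. F x y) S) T"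
  by (rule eq_matI) (auto simp: msum_def intro: sum.swap)

lemma sum_shift_mod: assumes "(d::nat) > 0"
  shows "(\<Sum>a\<in>{0..<d}. F ((a + b) mod d)) = (\<Sum>a\<in>{0..<d}. F a)"
proof -
  have e: "a + b + (d - b mod d) = a + d * (b div d) + d" for a
    using mult_div_mod_eq[of d b] mod_less_divisor[of d b] assms by linarith
  have "bij_betw (\<lambda>a. (a + b) mod d) {0..<d} {0..<d}"
  proof (rule bij_betw_byWitness[where f' = "\<lambda>a. (a + (d - b mod d)) mod d"])
    show "\<forall>a\<in>{0..<d}. ((a + b) mod d + (d - b mod d)) mod d = a"
    proof
      fix a assume a: "a \<in> {0..<d}"
      have "((a + b) mod d + (d - b mod d)) mod d = (a + b + (d - b mod d)) mod d"
        by (rule mod_add_left_eq)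
      also have "\<dots> = (a + d * (b div d) + d) mod d" unfolding e ..
      also have "\<dots> = a mod d" by (simp add: add.assoc[symmetric])
      finally show "((a + b) mod d + (d - b mod d)) mod d = a" using a by simp
    qed
    show "\<forall>a\<in>{0..<d}. ((a + (d - b mod d)) mod d + b) mod d = a"
    proof
      fix a assume a: "a \<in> {0..<d}"
      have "((a + (d - b mod d)) mod d + b) mod d = (a + (d - b mod d) + b) mod d"
        by (rule mod_add_left_eq)
      also have "a + (d - b mod d) + b = a + b + (d - b mod d)" by simp
      also have "(a + b + (d - b mod d)) mod d = (a + d * (b div d) + d) mod d" unfolding e ..
      also have "\<dots> = a mod d" by (simp add: add.assoc[symmetric])
      finally show "((a + (d - b mod d)) mod d + b) mod d = a" using a by simp
    qed
  qed (use assms in auto)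
  thus ?thesis by (rule sum.reindex_bij_betw)
qed

lemma msum_shift: assumes "(d::nat) > 0"
  shows "msum N (\<lambda>a. F ((a + b) mod d)) {0..<d} = msum N F {0..<d}"
proof (rule eq_matI)
  fix i j assume "i < dim_row (msum N F {0..<d})" "j < dim_col (msum N F {0..<d})"
  hence ij: "i < N" "j < N" by (auto simp: msum_def)
  show "msum N (\<lambda>a. F ((a + b) mod d)) {0..<d} $$ (i, j) = msum N F {0..<d} $$ (i, j)"
    unfolding msum_index[OF ij] by (rule sum_shift_mod[OF assms, of "\<lambda>a. F a $$ (i, j)" b])
qed (auto simp: msum_def)

lemma adj_msum: fixes f :: "'b \<Rightarrow> complex mat" assumes f: "\<And>x. x \<in> S \<Longrightarrow> f x \<in> carrier_mat N N"
  shows "mat_adjoint (msum N f S) = msum N (\<lambda>x. mat_adjoint (f x)) S"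
proof (rule eq_matI)
  fix i j assume "i < dim_row (msum N (\<lambda>x. mat_adjoint (f x)) S)" "j < dim_col (msum N (\<lambda>x. mat_adjoint (f x)) S)"
  hence ij: "i < N" "j < N" by (auto simp: msum_def)
  have "mat_adjoint (f x) $$ (i, j) = cnj (f x $$ (j, i))" if x: "x \<in> S" for x
    using adj_entry[OF f[OF x] ij] .
  thus "mat_adjoint (msum N f S) $$ (i, j) = msum N (\<lambda>x. mat_adjoint (f x)) S $$ (i, j)"
    using ij by (simp add: adj_entry[OF msum_carrier ij] cnj_sum)
qed (auto simp: msum_def)

definition Us :: "nat \<Rightarrow> nat \<Rightarrow> (nat \<Rightarrow> complex) \<Rightarrow> complex mat \<Rightarrow> complex mat" where
  "Us N d c A = (1 / complex_of_real (sqrt (real d))) \<cdot>\<^sub>m msum N (\<lambda>m. c m \<cdot>\<^sub>m (A ^\<^sub>m m)) {0..<d}"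

lemma msum_mult2: assumes f: "\<And>x. x \<in> S \<Longrightarrow> f x \<in> carrier_mat N N" and g: "\<And>y. y \<in> T \<Longrightarrow> g y \<in> carrier_mat N N"
  shows "msum N f S * msum N g T = msum N (\<lambda>x. msum N (\<lambda>y. f x * g y) T) S"
proof -
  have "msum N f S * msum N g T = msum N (\<lambda>x. f x * msum N g T) S"
    by (rule msum_mult_right[OF msum_carrier f])
  also have "\<dots> = msum N (\<lambda>x. msum N (\<lambda>y. f x * g y) T) S"
    by (rule msum_cong, rule msum_mult_left[OF f g])
  finally show ?thesis .
qed

lemma smult_mult_both: fixes X Y :: "complex mat"
  assumes "dim_col X = dim_row Y"
  shows "(a \<cdot>\<^sub>m X) * (b \<cdot>\<^sub>m Y) = (a * b) \<cdot>\<^sub>m (X * Y)"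
  using assms by (simp add: smult_mult_l smult_mult_r smult_smult_m mult.commute)

lemma adj_smult_gen: "mat_adjoint (c \<cdot>\<^sub>m (A :: complex mat)) = cnj c \<cdot>\<^sub>m mat_adjoint A"
  by (rule eq_matI) (auto simp: adj_entry')

lemma Us_carrier[simp]: "A \<in> carrier_mat N N \<Longrightarrow> Us N d c A \<in> carrier_mat N N"
  unfolding Us_def by simp

lemma msum_collapse: assumes "\<And>y. y \<in> T \<Longrightarrow> M y \<in> carrier_mat N N"
  shows "msum N (\<lambda>y. msum N (\<lambda>x. c x y \<cdot>\<^sub>m M y) S) T = msum N (\<lambda>y. (\<Sum>x\<in>S. c x y) \<cdot>\<^sub>m M y) T"
  by (rule msum_cong, rule msum_const_mat[OF assms])

lemma msum_collapse2: assumes "\<And>y z. y \<in> T \<Longrightarrow> z \<in> U \<Longrightarrow> M y z \<in> carrier_mat N N"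
  shows "msum N (\<lambda>y. msum N (\<lambda>z. msum N (\<lambda>x. c x y z \<cdot>\<^sub>m M y z) S) U) T
       = msum N (\<lambda>y. msum N (\<lambda>z. (\<Sum>x\<in>S. c x y z) \<cdot>\<^sub>m M y z) U) T"
  by (rule msum_cong, rule msum_cong, rule msum_const_mat[OF assms])

lemma adj_eq_pow: fixes A :: "complex mat"
  assumes A: "A \<in> carrier_mat N N" and AA: "mat_adjoint A * A = 1\<^sub>m N" and Ad: "A ^\<^sub>m d = 1\<^sub>m N" and d: "d > 0"
  shows "mat_adjoint A = A ^\<^sub>m (d - 1)"
proof -
  have "A ^\<^sub>m (d - 1) = (mat_adjoint A * A) * A ^\<^sub>m (d - 1)" using A AA by simp
  also have "\<dots> = mat_adjoint A * (A * A ^\<^sub>m (d - 1))" using A by (simp add: assoc_dim)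
  also have "A * A ^\<^sub>m (d - 1) = A ^\<^sub>m (1 + (d - 1))" using A pow_comm1[OF A] by simp
  also have "1 + (d - 1) = d" using d by simp
  finally show ?thesis using A Ad by simp
qed

lemma U_unitary: fixes A :: "complex mat"
  assumes A: "A \<in> carrier_mat N N" and AA: "mat_adjoint A * A = 1\<^sub>m N" and Ad: "A ^\<^sub>m d = 1\<^sub>m N" and d: "d > 0"
  and H: "\<And>t. t < d \<Longrightarrow> (\<Sum>b\<in>{0..<d}. cnj (c b) * c ((t + b) mod d)) = (if t = 0 then of_nat d else 0)"
  shows "Us N d c A * mat_adjoint (Us N d c A) = 1\<^sub>m N" "mat_adjoint (Us N d c A) * Us N d c A = 1\<^sub>m N"
proof -
  let ?k = "1 / complex_of_real (sqrt (real d))"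
  let ?S = "msum N (\<lambda>m. c m \<cdot>\<^sub>m (A ^\<^sub>m m)) {0..<d}"
  have adjA: "mat_adjoint A = A ^\<^sub>m (d - 1)" by (rule adj_eq_pow[OF A AA Ad d])
  have adjS: "mat_adjoint ?S = msum N (\<lambda>b. cnj (c b) \<cdot>\<^sub>m (A ^\<^sub>m ((d - 1) * b))) {0..<d}"
    using A by (simp add: adj_msum adj_smult_gen adj_pow[OF A] adjA pow_mult_mat[OF A])
  have "?S * mat_adjoint ?S = msum N (\<lambda>a. msum N (\<lambda>b. (c a \<cdot>\<^sub>m A ^\<^sub>m a) * (cnj (c b) \<cdot>\<^sub>m A ^\<^sub>m ((d - 1) * b))) {0..<d}) {0..<d}"
    unfolding adjS using A by (simp add: msum_mult2)
  also have "\<dots> = msum N (\<lambda>a. msum N (\<lambda>b. (c a * cnj (c b)) \<cdot>\<^sub>m A ^\<^sub>m ((a + (d - 1) * b) mod d)) {0..<d}) {0..<d}"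
  proof (intro msum_cong)
    fix a b
    have "A ^\<^sub>m a * A ^\<^sub>m ((d - 1) * b) = A ^\<^sub>m ((a + (d - 1) * b) mod d)"
      unfolding pow_add_mat[OF A, symmetric] by (rule pow_mod_mat[OF A Ad])
    thus "(c a \<cdot>\<^sub>m A ^\<^sub>m a) * (cnj (c b) \<cdot>\<^sub>m A ^\<^sub>m ((d - 1) * b)) = (c a * cnj (c b)) \<cdot>\<^sub>m A ^\<^sub>m ((a + (d - 1) * b) mod d)"
      using A by (simp add: smult_mult_both)
  qed
  also have "\<dots> = msum N (\<lambda>b. msum N (\<lambda>a. (c a * cnj (c b)) \<cdot>\<^sub>m A ^\<^sub>m ((a + (d - 1) * b) mod d)) {0..<d}) {0..<d}"
    by (rule msum_swap)
  also have "\<dots> = msum N (\<lambda>b. msum N (\<lambda>t. (c ((t + b) mod d) * cnj (c b)) \<cdot>\<^sub>m A ^\<^sub>m t) {0..<d}) {0..<d}"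
  proof (rule msum_cong)
    fix b assume b: "b \<in> {0..<d}"
    have e: "((t + b) mod d + (d - 1) * b) mod d = t" if "t < d" for t
    proof -
      have "((t + b) mod d + (d - 1) * b) mod d = (t + b + (d - 1) * b) mod d" by (rule mod_add_left_eq)
      also have "t + b + (d - 1) * b = t + d * b" using d by (cases d) (auto simp: algebra_simps)
      finally show ?thesis using that by simp
    qed
    show "msum N (\<lambda>a. (c a * cnj (c b)) \<cdot>\<^sub>m A ^\<^sub>m ((a + (d - 1) * b) mod d)) {0..<d}
        = msum N (\<lambda>t. (c ((t + b) mod d) * cnj (c b)) \<cdot>\<^sub>m A ^\<^sub>m t) {0..<d}"
    proof -
      have "msum N (\<lambda>a. (c a * cnj (c b)) \<cdot>\<^sub>m A ^\<^sub>m ((a + (d - 1) * b) mod d)) {0..<d}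
          = msum N (\<lambda>t. (c ((t + b) mod d) * cnj (c b)) \<cdot>\<^sub>m A ^\<^sub>m (((t + b) mod d + (d - 1) * b) mod d)) {0..<d}"
        using msum_shift[OF d, of N "\<lambda>a. (c a * cnj (c b)) \<cdot>\<^sub>m A ^\<^sub>m ((a + (d - 1) * b) mod d)" b]
        by simp
      also have "\<dots> = msum N (\<lambda>t. (c ((t + b) mod d) * cnj (c b)) \<cdot>\<^sub>m A ^\<^sub>m t) {0..<d}"
      proof (rule msum_cong)
        fix t assume t: "t \<in> {0..<d}"
        show "(c ((t + b) mod d) * cnj (c b)) \<cdot>\<^sub>m A ^\<^sub>m (((t + b) mod d + (d - 1) * b) mod d)
            = (c ((t + b) mod d) * cnj (c b)) \<cdot>\<^sub>m A ^\<^sub>m t"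
          using e[of t] t by simp
      qed
      finally show ?thesis .
    qed
  qed
  also have "\<dots> = msum N (\<lambda>t. msum N (\<lambda>b. (c ((t + b) mod d) * cnj (c b)) \<cdot>\<^sub>m A ^\<^sub>m t) {0..<d}) {0..<d}"
    by (rule msum_swap)
  also have "\<dots> = msum N (\<lambda>t. (\<Sum>b\<in>{0..<d}. c ((t + b) mod d) * cnj (c b)) \<cdot>\<^sub>m A ^\<^sub>m t) {0..<d}"
    using A by (intro msum_collapse) simp
  also have "\<dots> = msum N (\<lambda>t. (if t = 0 then of_nat d else 0) \<cdot>\<^sub>m A ^\<^sub>m t) {0..<d}"
    using H by (intro msum_cong) (simp add: mult.commute)
  also have "\<dots> = of_nat d \<cdot>\<^sub>m 1\<^sub>m N"
  proof (rule eq_matI)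
    fix i j assume "i < dim_row (of_nat d \<cdot>\<^sub>m 1\<^sub>m N :: complex mat)" "j < dim_col (of_nat d \<cdot>\<^sub>m 1\<^sub>m N :: complex mat)"
    hence ij: "i < N" "j < N" by auto
    have "(\<Sum>t\<in>{0..<d}. ((if t = 0 then of_nat d else 0) \<cdot>\<^sub>m A ^\<^sub>m t) $$ (i, j))
        = (\<Sum>t\<in>{0..<d}. if t = 0 then of_nat d * (A ^\<^sub>m 0) $$ (i, j) else 0)"
      using A ij by (intro sum.cong) auto
    also have "\<dots> = of_nat d * (A ^\<^sub>m 0) $$ (i, j)" using d by (simp add: sum.delta)
    finally show "msum N (\<lambda>t. (if t = 0 then of_nat d else 0) \<cdot>\<^sub>m A ^\<^sub>m t) {0..<d} $$ (i, j) = (of_nat d \<cdot>\<^sub>m 1\<^sub>m N) $$ (i, j)"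
      using A ij by simp
  qed auto
  finally have SS: "?S * mat_adjoint ?S = of_nat d \<cdot>\<^sub>m 1\<^sub>m N" .
  have kk: "?k * cnj ?k * of_nat d = 1"
  proof -
    have "?k * cnj ?k = complex_of_real (1 / real d)" using d
      by (simp add: complex_eq_iff power2_eq_square[symmetric] power_divide)
    thus ?thesis using d by (simp add: of_real_divide)
  qed
  have sq: "complex_of_real (sqrt (real d)) * complex_of_real (sqrt (real d)) = of_nat d"
    by (simp flip: of_real_mult)
  have kk': "of_nat d / (complex_of_real (sqrt (real d)) * complex_of_real (sqrt (real d))) = 1"
    unfolding sq using d by simp
  show U1: "Us N d c A * mat_adjoint (Us N d c A) = 1\<^sub>m N"
    unfolding Us_def using A
    by (simp add: adj_smult_gen smult_mult_both SS smult_smult_m kk')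
  show "mat_adjoint (Us N d c A) * Us N d c A = 1\<^sub>m N"
    by (rule mat_mult_left_right_inverse[OF Us_carrier[OF A] adj_carrier[OF Us_carrier[OF A]] U1])
qed

lemma U_comm: fixes A B :: "complex mat"
  assumes A: "A \<in> carrier_mat N N" and B: "B \<in> carrier_mat N N" and AB: "A * B = B * A"
  shows "Us N d c A * Us N d c B = Us N d c B * Us N d c A"
proof -
  have AB': "A * B = 1 \<cdot>\<^sub>m (B * A)" using AB by simp
  have "msum N (\<lambda>m. c m \<cdot>\<^sub>m (A ^\<^sub>m m)) {0..<d} * msum N (\<lambda>m. c m \<cdot>\<^sub>m (B ^\<^sub>m m)) {0..<d}
      = msum N (\<lambda>a. msum N (\<lambda>b. (c a * c b) \<cdot>\<^sub>m (B ^\<^sub>m b * A ^\<^sub>m a)) {0..<d}) {0..<d}"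
    using A B by (simp add: msum_mult2 smult_mult_both comm_pow[OF A B AB'] cong: msum_cong)
  also have "\<dots> = msum N (\<lambda>b. msum N (\<lambda>a. (c b * c a) \<cdot>\<^sub>m (B ^\<^sub>m b * A ^\<^sub>m a)) {0..<d}) {0..<d}"
    by (subst msum_swap) (simp add: mult.commute)
  also have "\<dots> = msum N (\<lambda>m. c m \<cdot>\<^sub>m (B ^\<^sub>m m)) {0..<d} * msum N (\<lambda>m. c m \<cdot>\<^sub>m (A ^\<^sub>m m)) {0..<d}"
    using A B by (simp add: msum_mult2 smult_mult_both)
  finally show ?thesis unfolding Us_def using A B by (simp add: smult_mult_both)
qed

lemma msum3: assumes f: "\<And>x. x \<in> S \<Longrightarrow> f x \<in> carrier_mat N N" and g: "\<And>y. y \<in> T \<Longrightarrow> g y \<in> carrier_mat N N"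
  and h: "\<And>z. z \<in> U \<Longrightarrow> h z \<in> carrier_mat N N"
  shows "msum N f S * msum N g T * msum N h U = msum N (\<lambda>x. msum N (\<lambda>y. msum N (\<lambda>z. f x * g y * h z) U) T) S"
proof -
  have "msum N f S * msum N g T * msum N h U = msum N (\<lambda>x. msum N (\<lambda>y. f x * g y) T) S * msum N h U"
    by (simp only: msum_mult2[OF f g])
  also have "\<dots> = msum N (\<lambda>x. msum N (\<lambda>y. f x * g y) T * msum N h U) S"
    by (rule msum_mult_right) (use f g in auto)
  also have "\<dots> = msum N (\<lambda>x. msum N (\<lambda>y. f x * g y * msum N h U) T) S"
    by (rule msum_cong, rule msum_mult_right) (use f g in auto)
  also have "\<dots> = msum N (\<lambda>x. msum N (\<lambda>y. msum N (\<lambda>z. f x * g y * h z) U) T) S"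
    by (rule msum_cong, rule msum_cong, rule msum_mult_left) (use f g h in auto)
  finally show ?thesis .
qed

lemma reorder3: "msum N (\<lambda>a. msum N (\<lambda>b. msum N (\<lambda>k. F a b k) S3) S2) S1
   = msum N (\<lambda>b. msum N (\<lambda>k. msum N (\<lambda>a. F a b k) S1) S3) S2"
proof -
  have "msum N (\<lambda>a. msum N (\<lambda>b. msum N (\<lambda>k. F a b k) S3) S2) S1
      = msum N (\<lambda>b. msum N (\<lambda>a. msum N (\<lambda>k. F a b k) S3) S1) S2" by (rule msum_swap)
  also have "\<dots> = msum N (\<lambda>b. msum N (\<lambda>k. msum N (\<lambda>a. F a b k) S1) S3) S2"
    by (rule msum_cong, rule msum_swap)
  finally show ?thesis .
qed

lemma reindex_sub: assumes d: "(d::nat) > 0" and a: "a < d"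
  shows "msum N (\<lambda>c. F c ((a + c) mod d)) {0..<d} = msum N (\<lambda>k. F ((k + (d - a)) mod d) k) {0..<d}"
proof -
  have "msum N (\<lambda>c. F c ((a + c) mod d)) {0..<d}
      = msum N (\<lambda>k. F ((k + (d - a)) mod d) ((a + (k + (d - a)) mod d) mod d)) {0..<d}"
    using msum_shift[OF d, of N "\<lambda>c. F c ((a + c) mod d)" "d - a"] by simp
  also have "\<dots> = msum N (\<lambda>k. F ((k + (d - a)) mod d) k) {0..<d}"
  proof (rule msum_cong)
    fix k assume k: "k \<in> {0..<d}"
    have "(a + (k + (d - a)) mod d) mod d = (a + (k + (d - a))) mod d" by (rule mod_add_right_eq)
    also have "a + (k + (d - a)) = k + d" using a by simp
    finally have "(a + (k + (d - a)) mod d) mod d = k" using k by simp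
    thus "F ((k + (d - a)) mod d) ((a + (k + (d - a)) mod d) mod d) = F ((k + (d - a)) mod d) k" by simp
  qed
  finally show ?thesis .
qed

lemma U_braid: fixes A B :: "complex mat"
  assumes A: "A \<in> carrier_mat N N" and B: "B \<in> carrier_mat N N"
  and Ad: "A ^\<^sub>m d = 1\<^sub>m N" and Bd: "B ^\<^sub>m d = 1\<^sub>m N" and AB: "A * B = q \<cdot>\<^sub>m (B * A)" and d: "d > 0"
  and H: "\<And>x y. x < d \<Longrightarrow> y < d \<Longrightarrow>
     (\<Sum>a\<in>{0..<d}. c a * c x * c ((y + (d - a)) mod d) * q ^ (a * x))
   = (\<Sum>a\<in>{0..<d}. c a * c y * c ((x + (d - a)) mod d) * q ^ (y * ((x + (d - a)) mod d)))"
  shows "Us N d c A * Us N d c B * Us N d c A = Us N d c B * Us N d c A * Us N d c B"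
proof -
  let ?SA = "msum N (\<lambda>m. c m \<cdot>\<^sub>m (A ^\<^sub>m m)) {0..<d}"
  let ?SB = "msum N (\<lambda>m. c m \<cdot>\<^sub>m (B ^\<^sub>m m)) {0..<d}"
  let ?L = "\<lambda>x y. (\<Sum>a\<in>{0..<d}. c a * c x * c ((y + (d - a)) mod d) * q ^ (a * x))"
  let ?R = "\<lambda>x y. (\<Sum>a\<in>{0..<d}. c a * c y * c ((x + (d - a)) mod d) * q ^ (y * ((x + (d - a)) mod d)))"
  have dA: "dim_row A = N" "dim_col A = N" and dB: "dim_row B = N" "dim_col B = N" using A B by auto
  have P1: "?SA * ?SB * ?SA = msum N (\<lambda>x. msum N (\<lambda>y. ?L x y \<cdot>\<^sub>m (B ^\<^sub>m x * A ^\<^sub>m y)) {0..<d}) {0..<d}"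
  proof -
    have "?SA * ?SB * ?SA = msum N (\<lambda>a. msum N (\<lambda>b. msum N (\<lambda>e. (c a \<cdot>\<^sub>m A ^\<^sub>m a) * (c b \<cdot>\<^sub>m B ^\<^sub>m b) * (c e \<cdot>\<^sub>m A ^\<^sub>m e)) {0..<d}) {0..<d}) {0..<d}"
      by (rule msum3) (use A B in auto)
    also have "\<dots> = msum N (\<lambda>a. msum N (\<lambda>b. msum N (\<lambda>e. (c a * c b * c e * q ^ (a * b)) \<cdot>\<^sub>m (B ^\<^sub>m b * A ^\<^sub>m ((a + e) mod d))) {0..<d}) {0..<d}) {0..<d}"
    proof (intro msum_cong)
      fix a b e
      have "A ^\<^sub>m a * B ^\<^sub>m b * A ^\<^sub>m e = (q ^ (a * b)) \<cdot>\<^sub>m (B ^\<^sub>m b * A ^\<^sub>m a) * A ^\<^sub>m e"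
        by (simp only: comm_pow[OF A B AB])
      also have "\<dots> = (q ^ (a * b)) \<cdot>\<^sub>m (B ^\<^sub>m b * A ^\<^sub>m ((a + e) mod d))"
        using dA dB by (simp add: smult_mult_l assoc_dim pow_add_mat[OF A, symmetric] pow_mod_mat[OF A Ad, of "a + e"])
      finally have e1: "A ^\<^sub>m a * B ^\<^sub>m b * A ^\<^sub>m e = (q ^ (a * b)) \<cdot>\<^sub>m (B ^\<^sub>m b * A ^\<^sub>m ((a + e) mod d))" .
      show "(c a \<cdot>\<^sub>m A ^\<^sub>m a) * (c b \<cdot>\<^sub>m B ^\<^sub>m b) * (c e \<cdot>\<^sub>m A ^\<^sub>m e) = (c a * c b * c e * q ^ (a * b)) \<cdot>\<^sub>m (B ^\<^sub>m b * A ^\<^sub>m ((a + e) mod d))"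
        using dA dB by (simp add: smult_mult_both e1 smult_smult_m mult.assoc)
    qed
    also have "\<dots> = msum N (\<lambda>a. msum N (\<lambda>b. msum N (\<lambda>k. (c a * c b * c ((k + (d - a)) mod d) * q ^ (a * b)) \<cdot>\<^sub>m (B ^\<^sub>m b * A ^\<^sub>m k)) {0..<d}) {0..<d}) {0..<d}"
      by (intro msum_cong reindex_sub[OF d]) simp
    also have "\<dots> = msum N (\<lambda>b. msum N (\<lambda>k. msum N (\<lambda>a. (c a * c b * c ((k + (d - a)) mod d) * q ^ (a * b)) \<cdot>\<^sub>m (B ^\<^sub>m b * A ^\<^sub>m k)) {0..<d}) {0..<d}) {0..<d}"
      by (rule reorder3)
    also have "\<dots> = msum N (\<lambda>x. msum N (\<lambda>y. ?L x y \<cdot>\<^sub>m (B ^\<^sub>m x * A ^\<^sub>m y)) {0..<d}) {0..<d}"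
      by (rule msum_collapse2) (use A B in auto)
    finally show ?thesis .
  qed
  have P2: "?SB * ?SA * ?SB = msum N (\<lambda>x. msum N (\<lambda>y. ?R x y \<cdot>\<^sub>m (B ^\<^sub>m x * A ^\<^sub>m y)) {0..<d}) {0..<d}"
  proof -
    have "?SB * ?SA * ?SB = msum N (\<lambda>a. msum N (\<lambda>b. msum N (\<lambda>e. (c a \<cdot>\<^sub>m B ^\<^sub>m a) * (c b \<cdot>\<^sub>m A ^\<^sub>m b) * (c e \<cdot>\<^sub>m B ^\<^sub>m e)) {0..<d}) {0..<d}) {0..<d}"
      by (rule msum3) (use A B in auto)
    also have "\<dots> = msum N (\<lambda>a. msum N (\<lambda>b. msum N (\<lambda>e. (c a * c b * c e * q ^ (b * e)) \<cdot>\<^sub>m (B ^\<^sub>m ((a + e) mod d) * A ^\<^sub>m b)) {0..<d}) {0..<d}) {0..<d}"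
    proof (intro msum_cong)
      fix a b e
      have "B ^\<^sub>m a * A ^\<^sub>m b * B ^\<^sub>m e = B ^\<^sub>m a * (A ^\<^sub>m b * B ^\<^sub>m e)"
        using dA dB by (simp add: assoc_dim)
      also have "\<dots> = B ^\<^sub>m a * ((q ^ (b * e)) \<cdot>\<^sub>m (B ^\<^sub>m e * A ^\<^sub>m b))"
        by (simp only: comm_pow[OF A B AB])
      also have "\<dots> = (q ^ (b * e)) \<cdot>\<^sub>m (B ^\<^sub>m ((a + e) mod d) * A ^\<^sub>m b)"
        using dA dB by (simp add: smult_mult_r assoc_dim[symmetric] pow_add_mat[OF B, symmetric] pow_mod_mat[OF B Bd, of "a + e"])
      finally have e1: "B ^\<^sub>m a * A ^\<^sub>m b * B ^\<^sub>m e = (q ^ (b * e)) \<cdot>\<^sub>m (B ^\<^sub>m ((a + e) mod d) * A ^\<^sub>m b)" .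
      show "(c a \<cdot>\<^sub>m B ^\<^sub>m a) * (c b \<cdot>\<^sub>m A ^\<^sub>m b) * (c e \<cdot>\<^sub>m B ^\<^sub>m e) = (c a * c b * c e * q ^ (b * e)) \<cdot>\<^sub>m (B ^\<^sub>m ((a + e) mod d) * A ^\<^sub>m b)"
        using dA dB by (simp add: smult_mult_both e1 smult_smult_m mult.assoc)
    qed
    also have "\<dots> = msum N (\<lambda>a. msum N (\<lambda>b. msum N (\<lambda>m. (c a * c b * c ((m + (d - a)) mod d) * q ^ (b * ((m + (d - a)) mod d))) \<cdot>\<^sub>m (B ^\<^sub>m m * A ^\<^sub>m b)) {0..<d}) {0..<d}) {0..<d}"
      by (intro msum_cong reindex_sub[OF d]) simp
    also have "\<dots> = msum N (\<lambda>b. msum N (\<lambda>m. msum N (\<lambda>a. (c a * c b * c ((m + (d - a)) mod d) * q ^ (b * ((m + (d - a)) mod d))) \<cdot>\<^sub>m (B ^\<^sub>m m * A ^\<^sub>m b)) {0..<d}) {0..<d}) {0..<d}"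
      by (rule reorder3)
    also have "\<dots> = msum N (\<lambda>b. msum N (\<lambda>m. ?R m b \<cdot>\<^sub>m (B ^\<^sub>m m * A ^\<^sub>m b)) {0..<d}) {0..<d}"
      by (rule msum_collapse2) (use A B in auto)
    also have "\<dots> = msum N (\<lambda>x. msum N (\<lambda>y. ?R x y \<cdot>\<^sub>m (B ^\<^sub>m x * A ^\<^sub>m y)) {0..<d}) {0..<d}"
      by (rule msum_swap)
    finally show ?thesis .
  qed
  have LR: "msum N (\<lambda>x. msum N (\<lambda>y. ?L x y \<cdot>\<^sub>m (B ^\<^sub>m x * A ^\<^sub>m y)) {0..<d}) {0..<d}
      = msum N (\<lambda>x. msum N (\<lambda>y. ?R x y \<cdot>\<^sub>m (B ^\<^sub>m x * A ^\<^sub>m y)) {0..<d}) {0..<d}"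
  proof (intro msum_cong)
    fix x y assume "x \<in> {0..<d}" "y \<in> {0..<d}"
    hence e: "?L x y = ?R x y" by (intro H) auto
    show "?L x y \<cdot>\<^sub>m (B ^\<^sub>m x * A ^\<^sub>m y) = ?R x y \<cdot>\<^sub>m (B ^\<^sub>m x * A ^\<^sub>m y)" unfolding e ..
  qed
  have k3: "\<And>X Y Z :: complex mat. X \<in> carrier_mat N N \<Longrightarrow> Y \<in> carrier_mat N N \<Longrightarrow> Z \<in> carrier_mat N N \<Longrightarrow>
     (k \<cdot>\<^sub>m X) * (k \<cdot>\<^sub>m Y) * (k \<cdot>\<^sub>m Z) = (k * k * k) \<cdot>\<^sub>m (X * Y * Z)" for k
    by (simp add: smult_mult_both)
  show ?thesis unfolding Us_def k3[OF msum_carrier msum_carrier msum_carrier] P1 P2 LR ..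
qed

definition encode :: "nat \<Rightarrow> nat \<Rightarrow> (nat \<Rightarrow> nat) \<Rightarrow> nat" where
  "encode d n f = (\<Sum>l\<in>{1..n}. f l * d ^ (l - 1))"

definition shv :: "nat \<Rightarrow> nat \<Rightarrow> (nat \<Rightarrow> nat) \<Rightarrow> nat \<Rightarrow> nat" where
  "shv d n v b = encode d n (\<lambda>l. (digit d l b + v l) mod d)"

lemma digit_lt: "d > 0 \<Longrightarrow> digit d j a < d"
  unfolding digit_def by simp

lemma digit_mod: assumes d: "d > 0" and l: "1 \<le> l" "l \<le> n"
  shows "digit d l (a mod d ^ n) = digit d l a"
proof -
  let ?P = "d ^ (l - 1)" and ?Q = "d ^ (n - (l - 1))"
  have PQ: "d ^ n = ?P * ?Q" using l by (simp flip: power_add)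
  have P0: "?P > 0" using d by simp
  have e: "a mod d ^ n = a mod ?P + ?P * (a div ?P mod ?Q)" unfolding PQ mod_mult2_eq[of a ?P ?Q] by (rule add.commute)
  have P0': "?P \<noteq> 0" using d by simp
  have "a mod d ^ n div ?P = a div ?P mod ?Q + a mod ?P div ?P" unfolding e by (rule div_mult_self2[OF P0'])
  also have "a mod ?P div ?P = 0" using P0 by simp
  finally have "a mod d ^ n div ?P = a div ?P mod ?Q" by simp
  moreover have "d dvd ?Q" using l by (simp add: dvd_power)
  ultimately show ?thesis unfolding digit_def by (simp add: mod_mod_cancel)
qed

lemma encode_Suc: "encode d (Suc n) f = encode d n f + f (Suc n) * d ^ n"
  unfolding encode_def by (simp add: sum.cl_ivl_Suc)

lemma encode_cong: "(\<And>l. l \<in> {1..n} \<Longrightarrow> f l = g l) \<Longrightarrow> encode d n f = encode d n g"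
  unfolding encode_def by (auto intro!: sum.cong)

lemma encode_lt: assumes "d > 0" "\<And>l. l \<in> {1..n} \<Longrightarrow> f l < d"
  shows "encode d n f < d ^ n"
  using assms(2)
proof (induct n)
  case 0 then show ?case by (simp add: encode_def)
next
  case (Suc n)
  have e: "encode d n f < d ^ n" using Suc by auto
  have "f (Suc n) + 1 \<le> d" using Suc(2)[of "Suc n"] by simp
  hence "(f (Suc n) + 1) * d ^ n \<le> d * d ^ n" by (rule mult_right_mono) simp
  thus ?case using e by (simp add: encode_Suc algebra_simps)
qed

lemma digit_encode: assumes d: "d > 0" and f: "\<And>l. l \<in> {1..n} \<Longrightarrow> f l < d" and j: "j \<in> {1..n}"
  shows "digit d j (encode d n f) = f j"
  using f j
proof (induct n)
  case 0 then show ?case by simp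
next
  case (Suc n)
  have f': "\<And>l. l \<in> {1..n} \<Longrightarrow> f l < d" using Suc(2) by auto
  have e: "encode d n f < d ^ n" by (rule encode_lt[OF d f'])
  show ?case
  proof (cases "j \<le> n")
    case True
    have "digit d j (encode d (Suc n) f) = digit d j (encode d (Suc n) f mod d ^ n)"
      using True Suc(3) by (simp add: digit_mod[OF d])
    also have "encode d (Suc n) f mod d ^ n = encode d n f" using e by (simp add: encode_Suc)
    finally show ?thesis using Suc(1)[OF f'] True Suc(3) by simp
  next
    case False
    hence j: "j = Suc n" using Suc(3) by simp
    have "encode d (Suc n) f div d ^ n = f (Suc n)" using e d by (simp add: encode_Suc)
    thus ?thesis unfolding j digit_def using Suc(2)[of "Suc n"] by simp
  qed
qed

lemma encode_digits: assumes d: "d > 0" and a: "a < d ^ n"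
  shows "encode d n (\<lambda>l. digit d l a) = a"
  using a
proof (induct n arbitrary: a)
  case 0 then show ?case by (simp add: encode_def)
next
  case (Suc n)
  have "encode d n (\<lambda>l. digit d l a) = encode d n (\<lambda>l. digit d l (a mod d ^ n))"
    by (rule encode_cong) (simp add: digit_mod[OF d])
  also have "\<dots> = a mod d ^ n" by (rule Suc(1)) (use d in simp)
  finally have e1: "encode d n (\<lambda>l. digit d l a) = a mod d ^ n" .
  have "a div d ^ n < d" using Suc(2) by (simp add: less_mult_imp_div_less)
  hence e2: "digit d (Suc n) a = a div d ^ n" unfolding digit_def by simp
  show ?case unfolding encode_Suc e1 e2 by (simp add: mod_div_mult_eq)
qed

lemma digits_eq: assumes d: "d > 0" and a: "a < d ^ n" and b: "b < d ^ n"
  and eq: "\<And>j. j \<in> {1..n} \<Longrightarrow> digit d j a = digit d j b"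
  shows "a = b"
proof -
  have "a = encode d n (\<lambda>l. digit d l a)" using encode_digits[OF d a] by simp
  also have "\<dots> = encode d n (\<lambda>l. digit d l b)" by (rule encode_cong) (rule eq)
  also have "\<dots> = b" by (rule encode_digits[OF d b])
  finally show ?thesis .
qed

lemma shv_lt: "d > 0 \<Longrightarrow> shv d n v b < d ^ n"
  unfolding shv_def by (rule encode_lt) auto

lemma shv_digit: "d > 0 \<Longrightarrow> j \<in> {1..n} \<Longrightarrow> digit d j (shv d n v b) = (digit d j b + v j) mod d"
  unfolding shv_def by (rule digit_encode) auto

lemma shv_shv: assumes d: "d > 0" shows "shv d n v (shv d n w b) = shv d n (\<lambda>l. w l + v l) b"
  unfolding shv_def[of d n v] shv_def[of d n "\<lambda>l. w l + v l"]
proof (rule encode_cong)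
  fix l assume l: "l \<in> {1..n}"
  have "(digit d l (shv d n w b) + v l) mod d = ((digit d l b + w l) mod d + v l) mod d"
    using shv_digit[OF d l] by simp
  also have "\<dots> = (digit d l b + (w l + v l)) mod d" by (simp add: mod_add_left_eq add.assoc)
  finally show "(digit d l (shv d n w b) + v l) mod d = (digit d l b + (w l + v l)) mod d" .
qed

lemma shv_zero: assumes d: "d > 0" and b: "b < d ^ n" and v: "\<And>l. l \<in> {1..n} \<Longrightarrow> v l mod d = 0"
  shows "shv d n v b = b"
proof -
  have "shv d n v b = encode d n (\<lambda>l. digit d l b)" unfolding shv_def
  proof (rule encode_cong)
    fix l assume l: "l \<in> {1..n}"
    have "(digit d l b + v l) mod d = (digit d l b + v l mod d) mod d" by (simp add: mod_add_right_eq)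
    also have "\<dots> = digit d l b" using v[OF l] digit_lt[OF d] by simp
    finally show "(digit d l b + v l) mod d = digit d l b" .
  qed
  also have "\<dots> = b" by (rule encode_digits[OF d b])
  finally show ?thesis .
qed

lemma shv_cong: assumes v: "\<And>l. l \<in> {1..n} \<Longrightarrow> v l mod d = w l mod d"
  shows "shv d n v b = shv d n w b"
  unfolding shv_def
proof (rule encode_cong)
  fix l assume l: "l \<in> {1..n}"
  have "(digit d l b + v l) mod d = (digit d l b + v l mod d) mod d" by (simp add: mod_add_right_eq)
  also have "\<dots> = (digit d l b + w l mod d) mod d" using v[OF l] by simp
  also have "\<dots> = (digit d l b + w l) mod d" by (simp add: mod_add_right_eq)
  finally show "(digit d l b + v l) mod d = (digit d l b + w l) mod d" .
qed

lemma add_neg_mod: assumes "(d::nat) > 0" shows "(x + (d - x mod d)) mod d = 0"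
proof -
  have "x + (d - x mod d) = d * (x div d) + d"
    using mult_div_mod_eq[of d x] mod_less_divisor[of d x] assms by linarith
  thus ?thesis by simp
qed

definition negv :: "nat \<Rightarrow> (nat \<Rightarrow> nat) \<Rightarrow> nat \<Rightarrow> nat" where
  "negv d v = (\<lambda>k. d - v k mod d)"

lemma shv_negv: assumes d: "d > 0" and b: "b < d ^ n"
  shows "shv d n v (shv d n (negv d v) b) = b" "shv d n (negv d v) (shv d n v b) = b"
proof -
  show "shv d n v (shv d n (negv d v) b) = b" unfolding shv_shv[OF d]
    by (rule shv_zero[OF d b]) (simp add: negv_def add_neg_mod[OF d] add.commute)
  show "shv d n (negv d v) (shv d n v b) = b" unfolding shv_shv[OF d]
    by (rule shv_zero[OF d b]) (simp add: negv_def add_neg_mod[OF d])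
qed

definition mmono :: "nat \<Rightarrow> (nat \<Rightarrow> nat) \<Rightarrow> (nat \<Rightarrow> complex) \<Rightarrow> complex mat" where
  "mmono N p f = mat N N (\<lambda>(a, b). if a = p b then f b else 0)"

lemma mono_carrier[simp]: "mmono N p f \<in> carrier_mat N N"
  unfolding mmono_def by simp

lemma mono_dim[simp]: "dim_row (mmono N p f) = N" "dim_col (mmono N p f) = N"
  unfolding mmono_def by simp_all

lemma mono_index[simp]: "a < N \<Longrightarrow> b < N \<Longrightarrow> mmono N p f $$ (a, b) = (if a = p b then f b else 0)"
  unfolding mmono_def by simp

lemma mono_cong: assumes "\<And>b. b < N \<Longrightarrow> p b = p' b" "\<And>b. b < N \<Longrightarrow> f b = f' b"
  shows "mmono N p f = mmono N p' f'"
  by (rule eq_matI) (use assms in auto)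

lemma mono_mult: assumes q: "\<And>b. b < N \<Longrightarrow> q b < N"
  shows "mmono N p f * mmono N q g = mmono N (\<lambda>b. p (q b)) (\<lambda>b. f (q b) * g b)"
proof (rule eq_matI)
  fix a b assume "a < dim_row (mmono N (\<lambda>b. p (q b)) (\<lambda>b. f (q b) * g b))" "b < dim_col (mmono N (\<lambda>b. p (q b)) (\<lambda>b. f (q b) * g b))"
  hence ab: "a < N" "b < N" by auto
  have "(mmono N p f * mmono N q g) $$ (a, b) = (\<Sum>k<N. mmono N p f $$ (a, k) * mmono N q g $$ (k, b))"
    by (rule mult_entry[OF mono_carrier mono_carrier ab])
  also have "\<dots> = (\<Sum>k<N. if k = q b then (if a = p (q b) then f (q b) else 0) * g b else 0)"
    using ab by (intro sum.cong) auto
  also have "\<dots> = (if a = p (q b) then f (q b) else 0) * g b" using q[OF ab(2)] by simp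
  finally show "(mmono N p f * mmono N q g) $$ (a, b) = mmono N (\<lambda>b. p (q b)) (\<lambda>b. f (q b) * g b) $$ (a, b)"
    using ab by simp
qed auto

lemma mono_adj: assumes "\<And>b. b < N \<Longrightarrow> p b < N" "\<And>b. b < N \<Longrightarrow> p' b < N"
  "\<And>b. b < N \<Longrightarrow> p (p' b) = b" "\<And>b. b < N \<Longrightarrow> p' (p b) = b"
  shows "mat_adjoint (mmono N p f) = mmono N p' (\<lambda>b. cnj (f (p' b)))"
proof (rule eq_matI)
  fix a b assume "a < dim_row (mmono N p' (\<lambda>b. cnj (f (p' b))))" "b < dim_col (mmono N p' (\<lambda>b. cnj (f (p' b))))"
  hence ab: "a < N" "b < N" by auto
  have "(b = p a) = (a = p' b)" using assms ab by metis
  thus "mat_adjoint (mmono N p f) $$ (a, b) = mmono N p' (\<lambda>b. cnj (f (p' b))) $$ (a, b)"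
    using ab by (auto simp: adj_entry[OF mono_carrier ab])
qed auto

lemma mono_smult: "c \<cdot>\<^sub>m mmono N p f = mmono N p (\<lambda>b. c * f b)"
  by (rule eq_matI) auto

lemma mono_one: "1\<^sub>m N = mmono N (\<lambda>b. b) (\<lambda>_. 1)"
  by (rule eq_matI) auto

lemma mono_pow_diag: "mmono N (\<lambda>b. b) f ^\<^sub>m k = mmono N (\<lambda>b. b) (\<lambda>b. f b ^ k)"
proof (induct k)
  case 0 then show ?case by (simp add: mono_one)
next
  case (Suc k) then show ?case by (simp add: mono_mult mult.commute)
qed

context
  fixes d n :: nat
  assumes d2: "d \<ge> 2"
begin

private lemma d0: "d > 0" using d2 by simp

abbreviation "NN \<equiv> d ^ n"

lemma mono_pow_shv: "mmono NN (shv d n v) (\<lambda>_. 1) ^\<^sub>m k = mmono NN (shv d n (\<lambda>l. k * v l)) (\<lambda>_. 1)"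
proof (induct k)
  case 0
  show ?case by (simp add: mono_one) (rule mono_cong, rule shv_zero[OF d0, symmetric], auto)
next
  case (Suc k)
  have "mmono NN (shv d n v) (\<lambda>_. 1) ^\<^sub>m Suc k = mmono NN (shv d n (\<lambda>l. k * v l)) (\<lambda>_. 1) * mmono NN (shv d n v) (\<lambda>_. 1)"
    using Suc by simp
  also have "\<dots> = mmono NN (\<lambda>b. shv d n (\<lambda>l. k * v l) (shv d n v b)) (\<lambda>b. 1)"
    by (simp add: mono_mult shv_lt[OF d0])
  also have "\<dots> = mmono NN (shv d n (\<lambda>l. Suc k * v l)) (\<lambda>_. 1)"
    by (rule mono_cong) (simp_all add: shv_shv[OF d0] algebra_simps)
  finally show ?case .
qed

definition ev :: "nat \<Rightarrow> nat \<Rightarrow> nat" where "ev l = (\<lambda>k. if k = l then 1 else 0)"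

lemma Xop_mono: assumes l: "l \<in> {1..n}"
  shows "Xop d n l = mmono NN (shv d n (ev l)) (\<lambda>_. 1)"
proof (rule eq_matI)
  fix a b assume "a < dim_row (mmono NN (shv d n (ev l)) (\<lambda>_. 1))" "b < dim_col (mmono NN (shv d n (ev l)) (\<lambda>_. 1))"
  hence ab: "a < NN" "b < NN" by auto
  have iff: "(digit d l a = (digit d l b + 1) mod d \<and> (\<forall>j\<in>{1..n} - {l}. digit d j a = digit d j b))
      = (a = shv d n (ev l) b)"
  proof
    assume H: "digit d l a = (digit d l b + 1) mod d \<and> (\<forall>j\<in>{1..n} - {l}. digit d j a = digit d j b)"
    show "a = shv d n (ev l) b"
    proof (rule digits_eq[OF d0 ab(1) shv_lt[OF d0]])
      fix j assume j: "j \<in> {1..n}"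
      show "digit d j a = digit d j (shv d n (ev l) b)"
        using H j digit_lt[OF d0, of j b] by (auto simp: shv_digit[OF d0 j] ev_def)
    qed
  next
    assume "a = shv d n (ev l) b"
    thus "digit d l a = (digit d l b + 1) mod d \<and> (\<forall>j\<in>{1..n} - {l}. digit d j a = digit d j b)"
      using l digit_lt[OF d0] by (auto simp: shv_digit[OF d0] ev_def)
  qed
  show "Xop d n l $$ (a, b) = mmono NN (shv d n (ev l)) (\<lambda>_. 1) $$ (a, b)"
    using ab iff unfolding Xop_def by simp
qed (auto simp: Xop_def)

lemma Zop_mono: "Zop d n j = mmono NN (\<lambda>b. b) (\<lambda>b. omega_pow d (real (digit d j b)))"
  unfolding Zop_def by (rule eq_matI) auto

definition EE :: "nat \<Rightarrow> nat \<Rightarrow> nat" where "EE j = (\<lambda>k. if k \<in> {1..<j} then 1 else 0)"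

lemma foldr_X: "set xs \<subseteq> {1..n} \<Longrightarrow> distinct xs \<Longrightarrow>
  foldr (\<lambda>l M. Xop d n l * M) xs (1\<^sub>m NN) = mmono NN (shv d n (\<lambda>k. if k \<in> set xs then 1 else 0)) (\<lambda>_. 1)"
proof (induct xs)
  case Nil
  show ?case by (simp add: mono_one) (rule mono_cong, rule shv_zero[OF d0, symmetric], auto)
next
  case (Cons l xs)
  have l: "l \<in> {1..n}" and nl: "l \<notin> set xs" using Cons by auto
  have "foldr (\<lambda>l M. Xop d n l * M) (l # xs) (1\<^sub>m NN)
      = mmono NN (shv d n (ev l)) (\<lambda>_. 1) * mmono NN (shv d n (\<lambda>k. if k \<in> set xs then 1 else 0)) (\<lambda>_. 1)"
    using Cons by (simp add: Xop_mono[OF l])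
  also have "\<dots> = mmono NN (\<lambda>b. shv d n (ev l) (shv d n (\<lambda>k. if k \<in> set xs then 1 else 0) b)) (\<lambda>_. 1)"
    by (simp add: mono_mult shv_lt[OF d0])
  also have "\<dots> = mmono NN (shv d n (\<lambda>k. if k \<in> set (l # xs) then 1 else 0)) (\<lambda>_. 1)"
  proof (rule mono_cong)
    fix b
    have "(\<lambda>k. (if k \<in> set xs then 1 else 0) + ev l k) = (\<lambda>k. if k \<in> set (l # xs) then 1 else 0)"
      using nl by (auto simp: ev_def)
    thus "shv d n (ev l) (shv d n (\<lambda>k. if k \<in> set xs then 1 else 0) b) = shv d n (\<lambda>k. if k \<in> set (l # xs) then 1 else 0) b"
      by (simp add: shv_shv[OF d0])
  qed simp
  finally show ?case .
qed

lemma Xprod_mono: assumes "j \<le> n + 1"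
  shows "Xprod d n j = mmono NN (shv d n (EE j)) (\<lambda>_. 1)"
proof -
  have "Xprod d n j = mmono NN (shv d n (\<lambda>k. if k \<in> set [1..<j] then 1 else 0)) (\<lambda>_. 1)"
    unfolding Xprod_def by (rule foldr_X) (use assms in auto)
  also have "(\<lambda>k. if k \<in> set [1..<j] then 1 else 0) = EE j" by (auto simp: EE_def)
  finally show ?thesis .
qed

abbreviation "WW \<equiv> omega_pow d ((real d + 1) / 2)"
abbreviation "om j b \<equiv> omega_pow d (real (digit d j b))"

lemma gamma_odd: assumes j: "1 \<le> j" "j \<le> n"
  shows "gamma d n (2 * j - 1) = mmono NN (shv d n (EE j)) (om j)"
proof -
  have o: "odd (2 * j - 1)" and e: "(2 * j - 1 + 1) div 2 = j" using j by auto
  show ?thesis unfolding gamma_def using o e j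
    by (simp add: Xprod_mono Zop_mono mono_mult)
qed

lemma gamma_even: assumes j: "1 \<le> j" "j \<le> n"
  shows "gamma d n (2 * j) = mmono NN (shv d n (EE (j + 1))) (\<lambda>b. WW * om j b)"
  unfolding gamma_def using j by (simp add: Xprod_mono Zop_mono mono_mult mono_smult)

lemma adj_shv: "mat_adjoint (mmono NN (shv d n v) f) = mmono NN (shv d n (negv d v)) (\<lambda>b. cnj (f (shv d n (negv d v) b)))"
  by (rule mono_adj) (auto simp: shv_lt[OF d0] shv_negv[OF d0])

definition Xd :: "nat \<Rightarrow> complex mat" where
  "Xd j = mmono NN (shv d n (\<lambda>k. if k = j then d - 1 else 0)) (\<lambda>_. 1)"

definition Dg :: "nat \<Rightarrow> complex mat" where
  "Dg j = mmono NN (\<lambda>b. b) (\<lambda>b. omega_pow d (real (digit d j b) - real (digit d (j + 1) b)))"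

lemma one_mod: "1 mod d = 1" using d2 by simp

lemma Lambda_odd: assumes j: "1 \<le> j" "j \<le> n"
  shows "Lambda d n (2 * j - 1) = Xd j"
proof -
  let ?nE = "negv d (EE (j + 1))"
  have i1: "2 * j - 1 + 1 = 2 * j" using j by simp
  have "Lambda d n (2 * j - 1) = WW \<cdot>\<^sub>m (mmono NN (shv d n (EE j)) (om j) *
      mmono NN (shv d n ?nE) (\<lambda>b. cnj (WW * om j (shv d n ?nE b))))"
    unfolding Lambda_def i1 gamma_odd[OF j] gamma_even[OF j] adj_shv ..
  also have "\<dots> = mmono NN (\<lambda>b. shv d n (EE j) (shv d n ?nE b))
      (\<lambda>b. WW * (om j (shv d n ?nE b) * cnj (WW * om j (shv d n ?nE b))))"
    by (simp add: mono_mult shv_lt[OF d0] mono_smult)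
  also have "\<dots> = Xd j" unfolding Xd_def
  proof (rule mono_cong)
    fix b
    show "shv d n (EE j) (shv d n ?nE b) = shv d n (\<lambda>k. if k = j then d - 1 else 0) b"
      unfolding shv_shv[OF d0]
      by (rule shv_cong) (use d2 in \<open>auto simp: negv_def EE_def one_mod\<close>)
    have "WW * (om j (shv d n ?nE b) * cnj (WW * om j (shv d n ?nE b)))
        = (WW * cnj WW) * (om j (shv d n ?nE b) * cnj (om j (shv d n ?nE b)))" by (simp add: ac_simps)
    also have "\<dots> = 1" by (simp only: op_mult_cnj) simp
    finally show "WW * (om j (shv d n ?nE b) * cnj (WW * om j (shv d n ?nE b))) = 1" .
  qed
  finally show ?thesis .
qed

lemma op_nat_mod: "omega_pow d (real (z mod d)) = omega_pow d (real z)"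
  using op_int_mod[OF d0, of "int z"] by (simp add: of_nat_mod[symmetric])

lemma Lambda_even: assumes j: "1 \<le> j" "j + 1 \<le> n"
  shows "Lambda d n (2 * j) = Dg j"
proof -
  let ?nE = "negv d (EE (j + 1))"
  have j': "1 \<le> j + 1" "j + 1 \<le> n" "j \<le> n" using j by auto
  have i1: "2 * j + 1 = 2 * (j + 1) - 1" by simp
  have "Lambda d n (2 * j) = WW \<cdot>\<^sub>m (mmono NN (shv d n (EE (j + 1))) (\<lambda>b. WW * om j b) *
      mmono NN (shv d n ?nE) (\<lambda>b. cnj (om (j + 1) (shv d n ?nE b))))"
    unfolding Lambda_def i1 gamma_odd[OF j'(1,2)] gamma_even[OF j(1) j'(3)] adj_shv ..
  also have "\<dots> = mmono NN (\<lambda>b. shv d n (EE (j + 1)) (shv d n ?nE b))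
      (\<lambda>b. WW * (WW * om j (shv d n ?nE b) * cnj (om (j + 1) (shv d n ?nE b))))"
    by (simp add: mono_mult shv_lt[OF d0] mono_smult)
  also have "\<dots> = Dg j" unfolding Dg_def
  proof (rule mono_cong)
    fix b assume b: "b < NN"
    show "shv d n (EE (j + 1)) (shv d n ?nE b) = b" by (rule shv_negv(1)[OF d0 b])
    have jn: "j \<in> {1..n}" "j + 1 \<in> {1..n}" using j by auto
    have dj: "digit d j (shv d n ?nE b) = (digit d j b + (d - 1)) mod d"
      using shv_digit[OF d0 jn(1)] j by (simp add: negv_def EE_def one_mod)
    have dj1: "digit d (j + 1) (shv d n ?nE b) = digit d (j + 1) b"
      using shv_digit[OF d0 jn(2)] digit_lt[OF d0] by (simp add: negv_def EE_def)
    have "WW * (WW * om j (shv d n ?nE b) * cnj (om (j + 1) (shv d n ?nE b)))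
       = omega_pow d ((real d + 1) / 2 + (real d + 1) / 2 + real (digit d j b + (d - 1)) + - real (digit d (j + 1) b))"
      unfolding dj dj1 op_nat_mod op_cnj op_add by (simp add: ac_simps)
    also have "(real d + 1) / 2 + (real d + 1) / 2 + real (digit d j b + (d - 1)) + - real (digit d (j + 1) b)
        = (real (digit d j b) - real (digit d (j + 1) b)) + real_of_int 2 * real d"
      using d2 by (simp add: of_nat_diff field_simps)
    also have "omega_pow d \<dots> = omega_pow d (real (digit d j b) - real (digit d (j + 1) b))"
      by (rule op_period[OF d0])
    finally show "WW * (WW * om j (shv d n ?nE b) * cnj (om (j + 1) (shv d n ?nE b)))
       = omega_pow d (real (digit d j b) - real (digit d (j + 1) b))" .
  qed
  finally show ?thesis .
qed

end

context
  fixes d n :: nat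
  assumes d2: "d \<ge> 2"
begin

private lemma dd0: "d > 0" using d2 by simp


lemma Xd_carrier[simp]: "Xd d n j \<in> carrier_mat (d ^ n) (d ^ n)"
  unfolding Xd_def[OF d2] by simp

lemma Dg_carrier[simp]: "Dg d n j \<in> carrier_mat (d ^ n) (d ^ n)"
  unfolding Dg_def[OF d2] by simp

lemma Xd_unit: "mat_adjoint (Xd d n j) * Xd d n j = 1\<^sub>m (d ^ n)"
  unfolding Xd_def[OF d2] adj_shv[OF d2] mono_one
  by (simp add: mono_mult shv_lt[OF dd0]) (rule mono_cong, auto simp: shv_negv[OF dd0])

lemma Dg_unit: "mat_adjoint (Dg d n j) * Dg d n j = 1\<^sub>m (d ^ n)"
proof -
  let ?f = "\<lambda>b. omega_pow d (real (digit d j b) - real (digit d (j + 1) b))"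
  have "mat_adjoint (Dg d n j) = mmono (d ^ n) (\<lambda>b. b) (\<lambda>b. cnj (?f b))"
    unfolding Dg_def[OF d2] by (rule mono_adj) auto
  thus ?thesis unfolding Dg_def[OF d2] mono_one
    by (simp add: mono_mult) (rule mono_cong, auto simp: mult.commute)
qed

lemma Xd_pow: "Xd d n j ^\<^sub>m d = 1\<^sub>m (d ^ n)"
  unfolding Xd_def[OF d2] mono_pow_shv[OF d2] mono_one
  by (rule mono_cong) (auto intro: shv_zero[OF dd0])

lemma Dg_pow: "Dg d n j ^\<^sub>m d = 1\<^sub>m (d ^ n)"
  unfolding Dg_def[OF d2] mono_pow_diag mono_one
proof (rule mono_cong)
  fix b
  let ?e = "real (digit d j b) - real (digit d (j + 1) b)"
  have eq: "real d * ?e = 0 + real_of_int (int (digit d j b) - int (digit d (j + 1) b)) * real d"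
    by (simp add: algebra_simps)
  have "omega_pow d ?e ^ d = 1" unfolding op_pow eq op_period[OF dd0] by simp
  thus "omega_pow d ?e ^ d = 1" .
qed simp

lemma Xd_comm: "Xd d n j * Xd d n j' = Xd d n j' * Xd d n j"
  unfolding Xd_def[OF d2] by (simp add: mono_mult shv_lt[OF dd0] shv_shv[OF dd0] add.commute)

lemma Dg_comm: "Dg d n j * Dg d n j' = Dg d n j' * Dg d n j"
  unfolding Dg_def[OF d2] by (simp add: mono_mult mult.commute)

lemma XD_far: assumes j: "j \<in> {1..n}" and j': "1 \<le> j'" "j' + 1 \<le> n" and ne: "j \<noteq> j'" "j \<noteq> j' + 1"
  shows "Xd d n j * Dg d n j' = Dg d n j' * Xd d n j"
  unfolding Xd_def[OF d2] Dg_def[OF d2]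
proof (simp add: mono_mult shv_lt[OF dd0], rule mono_cong)
  fix b
  let ?v = "\<lambda>k. if k = j then d - 1 else 0"
  have jn: "j' \<in> {1..n}" "j' + 1 \<in> {1..n}" using j' by auto
  have "digit d j' (shv d n ?v b) = digit d j' b" "digit d (j' + 1) (shv d n ?v b) = digit d (j' + 1) b"
    using shv_digit[OF dd0 jn(1)] shv_digit[OF dd0 jn(2)] ne digit_lt[OF dd0] by auto
  thus "omega_pow d (real (digit d j' b) - real (digit d (Suc j') b)) =
        omega_pow d (real (digit d j' (shv d n ?v b)) - real (digit d (Suc j') (shv d n ?v b)))" by simp
qed simp

lemma op_nat_mod': "omega_pow d (real (z mod d) + x) = omega_pow d (real z + x)"
  using op_nat_mod[OF d2, of z] by (simp add: op_add)

lemma XD_adj: assumes j: "1 \<le> j" "j + 1 \<le> n"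
  shows "Xd d n j * Dg d n j = omega_pow d 1 \<cdot>\<^sub>m (Dg d n j * Xd d n j)"
  unfolding Xd_def[OF d2] Dg_def[OF d2]
proof (simp add: mono_mult shv_lt[OF dd0] mono_smult, rule mono_cong)
  fix b
  let ?v = "\<lambda>k. if k = j then d - 1 else 0"
  have jn: "j \<in> {1..n}" "j + 1 \<in> {1..n}" using j by auto
  have e1: "digit d j (shv d n ?v b) = (digit d j b + (d - 1)) mod d"
    using shv_digit[OF dd0 jn(1)] by simp
  have e2: "digit d (j + 1) (shv d n ?v b) = digit d (j + 1) b"
    using shv_digit[OF dd0 jn(2)] digit_lt[OF dd0] by simp
  let ?x = "digit d j b" and ?y = "digit d (j + 1) b"
  have "omega_pow d 1 * omega_pow d (real ((?x + (d - 1)) mod d) - real ?y)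
      = omega_pow d (real ((?x + (d - 1)) mod d) + (1 - real ?y))"
    by (simp add: op_add[symmetric] algebra_simps)
  also have "\<dots> = omega_pow d (real (?x + (d - 1)) + (1 - real ?y))" by (rule op_nat_mod')
  also have "real (?x + (d - 1)) + (1 - real ?y) = (real ?x - real ?y) + real_of_int 1 * real d"
    using dd0 by (simp add: of_nat_diff)
  also have "omega_pow d \<dots> = omega_pow d (real ?x - real ?y)" by (rule op_period[OF dd0])
  finally have "omega_pow d 1 * omega_pow d (real ((?x + (d - 1)) mod d) - real ?y) = omega_pow d (real ?x - real ?y)" .
  thus "omega_pow d (real (digit d j b) - real (digit d (Suc j) b)) =
      omega_pow d 1 * omega_pow d (real (digit d j (shv d n ?v b)) - real (digit d (Suc j) (shv d n ?v b)))"
    using e1 e2 by simp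
qed simp

lemma DX_adj: assumes j: "1 \<le> j" "j + 1 \<le> n"
  shows "Dg d n j * Xd d n (j + 1) = omega_pow d 1 \<cdot>\<^sub>m (Xd d n (j + 1) * Dg d n j)"
  unfolding Xd_def[OF d2] Dg_def[OF d2]
proof (simp add: mono_mult shv_lt[OF dd0] mono_smult, rule mono_cong)
  fix b
  let ?v = "\<lambda>k. if k = Suc j then d - 1 else 0"
  have jn: "j \<in> {1..n}" "j + 1 \<in> {1..n}" using j by auto
  have e1: "digit d j (shv d n ?v b) = digit d j b"
    using shv_digit[OF dd0 jn(1)] digit_lt[OF dd0] by simp
  have e2: "digit d (j + 1) (shv d n ?v b) = (digit d (j + 1) b + (d - 1)) mod d"
    using shv_digit[OF dd0 jn(2)] by simp
  let ?x = "digit d j b" and ?y = "digit d (j + 1) b"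
  have "omega_pow d (real ?x - real ((?y + (d - 1)) mod d)) = cnj (omega_pow d (real ((?y + (d - 1)) mod d) + - real ?x))"
    by (simp add: op_cnj algebra_simps)
  also have "\<dots> = cnj (omega_pow d (real (?y + (d - 1)) + - real ?x))" by (simp only: op_nat_mod')
  also have "\<dots> = omega_pow d (real ?x - real (?y + (d - 1)))" by (simp add: op_cnj algebra_simps)
  also have "real ?x - real (?y + (d - 1)) = (1 + (real ?x - real ?y)) + real_of_int (-1) * real d"
    using dd0 by (simp add: of_nat_diff)
  also have "omega_pow d \<dots> = omega_pow d (1 + (real ?x - real ?y))" by (rule op_period[OF dd0])
  also have "\<dots> = omega_pow d 1 * omega_pow d (real ?x - real ?y)" by (rule op_add)
  finally show "omega_pow d (real (digit d j (shv d n ?v b)) - real (digit d (Suc j) (shv d n ?v b))) =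
      omega_pow d 1 * omega_pow d (real (digit d j b) - real (digit d (Suc j) b))"
    using e1 e2 by simp
qed simp

end

lemma Lam_odd_case: assumes d2: "d \<ge> 2" and i: "i \<in> {1..2 * n - 1}" and o: "odd i"
  obtains j where "i = 2 * j - 1" "1 \<le> j" "j \<le> n" "Lambda d n i = Xd d n j"
proof -
  obtain k where k: "i = 2 * k + 1" using o by (rule oddE)
  have j: "i = 2 * (k + 1) - 1" "1 \<le> k + 1" "k + 1 \<le> n" using k i by auto
  show ?thesis using that[OF j] Lambda_odd[OF d2 j(2,3)] j(1) by simp
qed

lemma Lam_even_case: assumes d2: "d \<ge> 2" and i: "i \<in> {1..2 * n - 1}" and e: "\<not> odd i"
  obtains j where "i = 2 * j" "1 \<le> j" "j + 1 \<le> n" "Lambda d n i = Dg d n j"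
proof -
  obtain k where k: "i = 2 * k" using e by (auto elim: evenE)
  have j: "1 \<le> k" "k + 1 \<le> n" using k i by auto
  show ?thesis using that[OF k j] Lambda_even[OF d2 j] k by simp
qed

lemma Lam_props: assumes d2: "d \<ge> 2" and i: "i \<in> {1..2 * n - 1}"
  shows "Lambda d n i \<in> carrier_mat (d ^ n) (d ^ n)" "mat_adjoint (Lambda d n i) * Lambda d n i = 1\<^sub>m (d ^ n)"
    "Lambda d n i ^\<^sub>m d = 1\<^sub>m (d ^ n)"
proof -
  have "Lambda d n i \<in> carrier_mat (d ^ n) (d ^ n) \<and> mat_adjoint (Lambda d n i) * Lambda d n i = 1\<^sub>m (d ^ n)
    \<and> Lambda d n i ^\<^sub>m d = 1\<^sub>m (d ^ n)"
  proof (cases "odd i")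
    case True
    then obtain j where "Lambda d n i = Xd d n j" using Lam_odd_case[OF d2 i] by metis
    thus ?thesis using Xd_carrier[OF d2] Xd_unit[OF d2] Xd_pow[OF d2] by simp
  next
    case False
    then obtain j where "Lambda d n i = Dg d n j" using Lam_even_case[OF d2 i] by metis
    thus ?thesis using Dg_carrier[OF d2] Dg_unit[OF d2] Dg_pow[OF d2] by simp
  qed
  thus "Lambda d n i \<in> carrier_mat (d ^ n) (d ^ n)" "mat_adjoint (Lambda d n i) * Lambda d n i = 1\<^sub>m (d ^ n)"
    "Lambda d n i ^\<^sub>m d = 1\<^sub>m (d ^ n)" by auto
qed

lemma Lam_far: assumes d2: "d \<ge> 2" and i: "i \<in> {1..2 * n - 1}" and i': "i' \<in> {1..2 * n - 1}"
  and far: "i + 1 < i' \<or> i' + 1 < i"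
  shows "Lambda d n i * Lambda d n i' = Lambda d n i' * Lambda d n i"
proof (cases "odd i")
  case True
  obtain j where j: "i = 2 * j - 1" "1 \<le> j" "j \<le> n" "Lambda d n i = Xd d n j" using Lam_odd_case[OF d2 i True] .
  show ?thesis
  proof (cases "odd i'")
    case True
    obtain j' where j': "Lambda d n i' = Xd d n j'" using Lam_odd_case[OF d2 i' True] by metis
    show ?thesis unfolding j(4) j' by (rule Xd_comm[OF d2])
  next
    case False
    obtain j' where j': "i' = 2 * j'" "1 \<le> j'" "j' + 1 \<le> n" "Lambda d n i' = Dg d n j'"
      using Lam_even_case[OF d2 i' False] .
    have ne: "j \<noteq> j'" "j \<noteq> j' + 1" using far j j' by auto
    show ?thesis unfolding j(4) j'(4) by (rule XD_far[OF d2 _ j'(2,3) ne]) (use j in auto)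
  qed
next
  case False
  obtain j where j: "i = 2 * j" "1 \<le> j" "j + 1 \<le> n" "Lambda d n i = Dg d n j" using Lam_even_case[OF d2 i False] .
  show ?thesis
  proof (cases "odd i'")
    case True
    obtain j' where j': "i' = 2 * j' - 1" "1 \<le> j'" "j' \<le> n" "Lambda d n i' = Xd d n j'"
      using Lam_odd_case[OF d2 i' True] .
    have ne: "j' \<noteq> j" "j' \<noteq> j + 1" using far j j' by auto
    show ?thesis unfolding j(4) j'(4) by (rule XD_far[OF d2 _ j(2,3) ne, symmetric]) (use j' in auto)
  next
    case False
    obtain j' where j': "Lambda d n i' = Dg d n j'" using Lam_even_case[OF d2 i' False] by metis
    show ?thesis unfolding j(4) j' by (rule Dg_comm[OF d2])
  qed
qed

lemma Lam_adj: assumes d2: "d \<ge> 2" and i: "i \<in> {1..2 * n - 2}"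
  shows "Lambda d n i * Lambda d n (i + 1) = omega_pow d 1 \<cdot>\<^sub>m (Lambda d n (i + 1) * Lambda d n i)"
proof -
  have i1: "i \<in> {1..2 * n - 1}" "i + 1 \<in> {1..2 * n - 1}" using i by auto
  show ?thesis
  proof (cases "odd i")
    case True
    obtain j where j: "i = 2 * j - 1" "1 \<le> j" "j \<le> n" "Lambda d n i = Xd d n j" using Lam_odd_case[OF d2 i1(1) True] .
    have j1: "j + 1 \<le> n" using j i by auto
    have "i + 1 = 2 * j" using j by simp
    hence L: "Lambda d n (i + 1) = Dg d n j" using Lambda_even[OF d2 j(2) j1] by simp
    show ?thesis unfolding j(4) L by (rule XD_adj[OF d2 j(2) j1])
  next
    case False
    obtain j where j: "i = 2 * j" "1 \<le> j" "j + 1 \<le> n" "Lambda d n i = Dg d n j" using Lam_even_case[OF d2 i1(1) False] .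
    have "i + 1 = 2 * (j + 1) - 1" using j by simp
    hence L: "Lambda d n (i + 1) = Xd d n (j + 1)" using Lambda_odd[OF d2, of "j + 1" n] j by simp
    show ?thesis unfolding j(4) L by (rule DX_adj[OF d2 j(2,3)])
  qed
qed

lemma cseq_natmod: assumes d: "d > 0" and a: "a < d"
  shows "cseq d r s (int ((y + (d - a)) mod d)) = cseq d r s (int y - int a)"
proof -
  have "int ((y + (d - a)) mod d) = (int y - int a + int d) mod int d"
    using a by (simp add: of_nat_mod of_nat_diff algebra_simps)
  thus ?thesis using cseq_mod[OF d] cseq_plus_d[OF d] by simp
qed

lemma op_natpow: assumes d: "d > 0" and a: "a < d"
  shows "omega_pow d 1 ^ (y * ((x + (d - a)) mod d)) = omega_pow d (real_of_int (int y * (int x - int a)))"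
proof -
  have "omega_pow d 1 ^ (y * ((x + (d - a)) mod d)) = omega_pow d (real_of_int (int (y * ((x + (d - a)) mod d))))"
    by (simp add: op_pow)
  also have "\<dots> = omega_pow d (real_of_int (int (y * ((x + (d - a)) mod d)) mod int d))"
    by (rule op_int_mod[OF d, symmetric])
  also have "int (y * ((x + (d - a)) mod d)) mod int d = (int y * (int x - int a)) mod int d"
  proof -
    have e1: "int ((x + (d - a)) mod d) = (int x - int a + int d) mod int d"
      using a by (simp add: of_nat_mod of_nat_diff algebra_simps)
    have "int (y * ((x + (d - a)) mod d)) = int y * ((int x - int a + int d) mod int d)"
      by (simp only: of_nat_mult e1)
    hence "int (y * ((x + (d - a)) mod d)) mod int d = (int y * ((int x - int a + int d) mod int d)) mod int d"
      by (simp only:)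
    also have "\<dots> = (int y * (int x - int a + int d)) mod int d" by (rule mod_mult_right_eq)
    also have "int y * (int x - int a + int d) = int y * (int x - int a) + int y * int d" by (simp add: algebra_simps)
    finally show ?thesis by simp
  qed
  also have "omega_pow d (real_of_int ((int y * (int x - int a)) mod int d)) = omega_pow d (real_of_int (int y * (int x - int a)))"
    by (rule op_int_mod[OF d])
  finally show ?thesis .
qed

lemma H_unit: assumes d: "d > 0" and s: "s \<in> {1, -1::int}" and t: "t < d"
  shows "(\<Sum>b\<in>{0..<d}. cnj (cseq d r s (int b)) * cseq d r s (int ((t + b) mod d))) = (if t = 0 then of_nat d else 0)"
proof -
  have "(\<Sum>b\<in>{0..<d}. cnj (cseq d r s (int b)) * cseq d r s (int ((t + b) mod d)))
      = (\<Sum>b\<in>{0..<d}. cnj (cseq d r s (int b) * cnj (cseq d r s (int b + int t))))"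
  proof (rule sum.cong)
    fix b
    have "cseq d r s (int ((t + b) mod d)) = cseq d r s (int b + int t)"
      using cseq_mod[OF d, of r s "int b + int t"] by (simp add: of_nat_mod add.commute)
    thus "cnj (cseq d r s (int b)) * cseq d r s (int ((t + b) mod d)) = cnj (cseq d r s (int b) * cnj (cseq d r s (int b + int t)))"
      by simp
  qed simp
  also have "\<dots> = cnj (\<Sum>m\<in>{0..<int d}. cseq d r s m * cnj (cseq d r s (m + int t)))"
    unfolding cnj_sum sum_int_nat ..
  also have "\<dots> = (if t = 0 then of_nat d else 0)"
    using part_i[OF d s, of "int t" r] t by simp
  finally show ?thesis .
qed

lemma H_braid: assumes d: "d > 0" and s: "s \<in> {1, -1::int}" and x: "x < d" and y: "y < d"
  shows "(\<Sum>a\<in>{0..<d}. cseq d r s (int a) * cseq d r s (int x) * cseq d r s (int ((y + (d - a)) mod d)) * omega_pow d 1 ^ (a * x))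
       = (\<Sum>a\<in>{0..<d}. cseq d r s (int a) * cseq d r s (int y) * cseq d r s (int ((x + (d - a)) mod d)) * omega_pow d 1 ^ (y * ((x + (d - a)) mod d)))"
proof -
  let ?c = "cseq d r s"
  let ?X = "int x" and ?Y = "int y"
  have L: "(\<Sum>a\<in>{0..<d}. ?c (int a) * ?c ?X * ?c (int ((y + (d - a)) mod d)) * omega_pow d 1 ^ (a * x))
      = (\<Sum>t\<in>{0..<int d}. ?c t * ?c ?X * ?c (?Y - t) * omega_pow d (real_of_int (1 * ?X * t)))"
    unfolding sum_int_nat
  proof (rule sum.cong)
    fix a assume a: "a \<in> {0..<d}"
    show "?c (int a) * ?c ?X * ?c (int ((y + (d - a)) mod d)) * omega_pow d 1 ^ (a * x)
        = ?c (int a) * ?c ?X * ?c (?Y - int a) * omega_pow d (real_of_int (1 * ?X * int a))"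
      using a cseq_natmod[OF d, where a=a and y=y and r=r and s=s] by (simp add: op_pow mult.commute)
  qed simp
  let ?h = "\<lambda>t. ?c t * ?c ?Y * ?c (?X - t) * omega_pow d (real_of_int (?Y * (?X - t)))"
  have R: "(\<Sum>a\<in>{0..<d}. ?c (int a) * ?c ?Y * ?c (int ((x + (d - a)) mod d)) * omega_pow d 1 ^ (y * ((x + (d - a)) mod d)))
      = (\<Sum>t\<in>{0..<int d}. ?h t)"
    unfolding sum_int_nat
  proof (rule sum.cong)
    fix a assume a: "a \<in> {0..<d}"
    show "?c (int a) * ?c ?Y * ?c (int ((x + (d - a)) mod d)) * omega_pow d 1 ^ (y * ((x + (d - a)) mod d)) = ?h (int a)"
      using a cseq_natmod[OF d, where a=a and y=x and r=r and s=s] op_natpow[OF d, where a=a and y=y and x=x] by simp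
  qed simp
  have per: "?h (z mod int d) = ?h z" for z
  proof -
    have c1: "?c (z mod int d) = ?c z" by (rule cseq_mod[OF d])
    have c2: "?c (?X - z mod int d) = ?c (?X - z)"
    proof -
      have "?c (?X - z mod int d) = ?c ((?X - z mod int d) mod int d)" by (rule cseq_mod[OF d, symmetric])
      also have "(?X - z mod int d) mod int d = (?X - z) mod int d" by (rule mod_diff_right_eq)
      finally show ?thesis using cseq_mod[OF d] by simp
    qed
    have c3: "omega_pow d (real_of_int (?Y * (?X - z mod int d))) = omega_pow d (real_of_int (?Y * (?X - z)))"
    proof -
      have "(?Y * (?X - z mod int d)) mod int d = (?Y * (?X - z)) mod int d"
        by (metis mod_diff_right_eq mod_mult_right_eq)
      thus ?thesis by (metis op_int_mod[OF d])
    qed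
    show ?thesis using c1 c2 c3 by simp
  qed
  have "(\<Sum>t\<in>{0..<int d}. ?h t) = (\<Sum>t\<in>{0..<int d}. ?h (?X - t))"
    by (rule sum_reflect[where g="?h" and c="?X", OF d per, symmetric])
  also have "\<dots> = (\<Sum>t\<in>{0..<int d}. ?c t * ?c (?X - t) * ?c ?Y * omega_pow d (real_of_int (1 * ?Y * t)))"
    by (rule sum.cong) (simp_all add: ac_simps)
  also have "\<dots> = (\<Sum>t\<in>{0..<int d}. ?c t * ?c ?X * ?c (?Y - t) * omega_pow d (real_of_int (1 * ?X * t)))"
    by (rule part_ii_gen[OF d s]) simp
  finally show ?thesis unfolding L R by simp
qed

theorem mainTheorem3:
  fixes d :: nat
  assumes "d \<ge> 2"
  shows "(\<forall>r<d. \<forall>s\<in>{1, -1::int}.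
            (\<forall>m. cseq d r s (m + int d) = cseq d r s m)
          \<and> (\<forall>t\<in>{0..<int d}. (\<Sum>m\<in>{0..<int d}. cseq d r s m * cnj (cseq d r s (m + t)))
                 = (if t = 0 then of_nat d else 0))
          \<and> (\<forall>k\<in>{0..<int d}. \<forall>m\<in>{0..<int d}.
                 (\<Sum>t\<in>{0..<int d}. cseq d r s t * cseq d r s ((k - t) mod int d) * cseq d r s m
                     * omega_pow d (real_of_int (m * t)))
               = (\<Sum>t\<in>{0..<int d}. cseq d r s t * cseq d r s k * cseq d r s ((m - t) mod int d)
                     * omega_pow d (real_of_int (k * t))))
          \<and> (\<forall>n\<ge>1.
                (\<forall>i\<in>{1..2*n-1}. unitary_mat (d ^ n) (Uop d r s n i))
              \<and> (\<forall>i\<in>{1..2*n-1}. \<forall>j\<in>{1..2*n-1}. (i + 1 < j \<or> j + 1 < i) \<longrightarrow>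
                    Uop d r s n i * Uop d r s n j = Uop d r s n j * Uop d r s n i)
              \<and> (\<forall>i\<in>{1..2*n-2}.
                    Uop d r s n i * Uop d r s n (i + 1) * Uop d r s n i
                  = Uop d r s n (i + 1) * Uop d r s n i * Uop d r s n (i + 1))))
       \<and> (d \<ge> 3 \<longrightarrow>
           (\<forall>r1<d. \<forall>r2<d. \<forall>s1\<in>{1, -1::int}. \<forall>s2\<in>{1, -1::int}. (r1, s1) \<noteq> (r2, s2) \<longrightarrow>
              (\<exists>m\<in>{0..<int d}. cseq d r1 s1 m \<noteq> cseq d r2 s2 m)))"
proof -
  have d2: "d \<ge> 2" by fact
  have d0: "d > 0" using d2 by simp
  have U: "Uop d r s n i = Us (d ^ n) d (\<lambda>m. cseq d r s (int m)) (Lambda d n i)" for r s n i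
    unfolding Uop_def Us_def ..
  have A: "(\<forall>m. cseq d r s (m + int d) = cseq d r s m)
          \<and> (\<forall>t\<in>{0..<int d}. (\<Sum>m\<in>{0..<int d}. cseq d r s m * cnj (cseq d r s (m + t)))
                 = (if t = 0 then of_nat d else 0))
          \<and> (\<forall>k\<in>{0..<int d}. \<forall>m\<in>{0..<int d}.
                 (\<Sum>t\<in>{0..<int d}. cseq d r s t * cseq d r s ((k - t) mod int d) * cseq d r s m
                     * omega_pow d (real_of_int (m * t)))
               = (\<Sum>t\<in>{0..<int d}. cseq d r s t * cseq d r s k * cseq d r s ((m - t) mod int d)
                     * omega_pow d (real_of_int (k * t))))
          \<and> (\<forall>n\<ge>1.
                (\<forall>i\<in>{1..2*n-1}. unitary_mat (d ^ n) (Uop d r s n i))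
              \<and> (\<forall>i\<in>{1..2*n-1}. \<forall>j\<in>{1..2*n-1}. (i + 1 < j \<or> j + 1 < i) \<longrightarrow>
                    Uop d r s n i * Uop d r s n j = Uop d r s n j * Uop d r s n i)
              \<and> (\<forall>i\<in>{1..2*n-2}.
                    Uop d r s n i * Uop d r s n (i + 1) * Uop d r s n i
                  = Uop d r s n (i + 1) * Uop d r s n i * Uop d r s n (i + 1)))"
    if r: "r < d" and s: "s \<in> {1, -1::int}" for r s
  proof (intro conjI allI ballI impI)
    fix m show "cseq d r s (m + int d) = cseq d r s m" by (rule cseq_plus_d[OF d0])
  next
    fix t assume "t \<in> {0..<int d}"
    thus "(\<Sum>m\<in>{0..<int d}. cseq d r s m * cnj (cseq d r s (m + t))) = (if t = 0 then of_nat d else 0)"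
      by (rule part_i[OF d0 s])
  next
    fix k m :: int
    show "(\<Sum>t\<in>{0..<int d}. cseq d r s t * cseq d r s ((k - t) mod int d) * cseq d r s m
                     * omega_pow d (real_of_int (m * t)))
               = (\<Sum>t\<in>{0..<int d}. cseq d r s t * cseq d r s k * cseq d r s ((m - t) mod int d)
                     * omega_pow d (real_of_int (k * t)))"
      by (rule part_ii[OF d0 s])
  next
    fix n :: nat and i assume n: "1 \<le> n" and i: "i \<in> {1..2 * n - 1}"
    note P = Lam_props[OF d2 i]
    have HU: "\<And>t. t < d \<Longrightarrow> (\<Sum>b\<in>{0..<d}. cnj (cseq d r s (int b)) * cseq d r s (int ((t + b) mod d))) = (if t = 0 then of_nat d else 0)"
      by (rule H_unit[OF d0 s])
    note UU = U_unitary[OF P(1) P(2) P(3) d0, of "\<lambda>m. cseq d r s (int m)", OF HU]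
    show "unitary_mat (d ^ n) (Uop d r s n i)"
      unfolding unitary_mat_def U using UU P(1) by simp
  next
    fix n :: nat and i j assume n: "1 \<le> n" and i: "i \<in> {1..2 * n - 1}" and j: "j \<in> {1..2 * n - 1}"
      and far: "i + 1 < j \<or> j + 1 < i"
    show "Uop d r s n i * Uop d r s n j = Uop d r s n j * Uop d r s n i"
      unfolding U by (rule U_comm[OF Lam_props(1)[OF d2 i] Lam_props(1)[OF d2 j] Lam_far[OF d2 i j far]])
  next
    fix n :: nat and i assume n: "1 \<le> n" and i: "i \<in> {1..2 * n - 2}"
    have i1: "i \<in> {1..2 * n - 1}" "i + 1 \<in> {1..2 * n - 1}" using i by auto
    show "Uop d r s n i * Uop d r s n (i + 1) * Uop d r s n i = Uop d r s n (i + 1) * Uop d r s n i * Uop d r s n (i + 1)"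
      unfolding U
      by (rule U_braid[OF Lam_props(1)[OF d2 i1(1)] Lam_props(1)[OF d2 i1(2)] Lam_props(3)[OF d2 i1(1)]
            Lam_props(3)[OF d2 i1(2)] Lam_adj[OF d2 i] d0 H_braid[OF d0 s]])
  qed
  show ?thesis
    apply (rule conjI)
    subgoal by (intro allI impI ballI, rule A) assumption+
    subgoal by (intro impI allI ballI, rule distinct_c) assumption+
    done
qed

end
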